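(* Let $G=(V,E)$ be a $2$-edge-strongly biconnected directed graph with $n=|V|$, run Algorithm A (described in the context) on $G$, let $H=(V,U)$ be the minimal $2$-edge-connected spanning subgraph chosen in its step (1), and let $i$ be the number of b-bridges in $H$. Then the edge set $E_{2e}$ of the output of Algorithm A satisfies $|E_{2e}|\leq i(n-1)+5n$.
   Context: A directed graph is strongly biconnected if it is strongly connected and its underlying undirected graph (ignoring edge directions) is biconnected. A strongly biconnected component of a directed graph is a maximal strongly biconnected subgraph. A strongly biconnected directed graph $G=(V,E)$ is $2$-edge-strongly biconnected if it has at least three vertices and $(V,E\setminus\{e\})$ is strongly biconnected for every $e\in E$. For a directed graph $D=(V,F)$, an edge $e\in F$ is a b-bridge if $(V,F\setminus\{e\})$ is not strongly biconnected. A directed graph is $2$-edge-connected if it is strongly connected and remains strongly connected after deleting any single edge. Algorithm A, on input a $2$-edge-strongly biconnected directed graph $G=(V,E)$: (1) Choose $U\subseteq E$ such that $H=(V,U)$ is a minimal $2$-edge-connected spanning subgraph of $G$ (i.e. $H$ is $2$-edge-connected and deleting any edge of $U$ destroys $2$-edge-connectivity). (2) If $H$ is $2$-edge-strongly biconnected, output $H$ (so the output edge set is $E_{2e}=U$) and stop. (3) Otherwise set $E_{2e}:=U$. While the underlying undirected graph of $(V,E_{2e})$ is not biconnected: compute the strongly biconnected components of $(V,E_{2e})$, find an edge $(v,w)\in E\setminus E_{2e}$ such that $v,w$ are not in the same strongly biconnected component of $(V,E_{2e})$, and add $(v,w)$ to $E_{2e}$. (4) Compute the set of b-bridges of $(V,E_{2e})$.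 For each such b-bridge $t$: while the underlying undirected graph of $(V,E_{2e}\setminus\{t\})$ is not biconnected, compute the strongly biconnected components of $(V,E_{2e}\setminus\{t\})$, find an edge $(u,w)\in E\setminus E_{2e}$ such that $u,w$ are not in the same strongly biconnected component of $(V,E_{2e}\setminus\{t\})$, and add $(u,w)$ to $E_{2e}$. (5) Output $(V,E_{2e})$. *)

theory Defs
  imports Main
begin

text \<open>Directed graphs are pairs (V, F) with V a finite vertex set and F a set of
ordered pairs (arcs). Subgraphs are always taken induced on the vertex set given.\<close>

definition restrict :: "'a set \<Rightarrow> ('a \<times> 'a) set \<Rightarrow> ('a \<times> 'a) set" where
  "restrict V F = F \<inter> (V \<times> V)"

definition strongly_connected :: "'a set \<Rightarrow> ('a \<times> 'a) set \<Rightarrow> bool" where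
  "strongly_connected V F \<longleftrightarrow> (\<forall>u\<in>V. \<forall>v\<in>V. (u, v) \<in> (restrict V F)\<^sup>*)"

definition und_connected :: "'a set \<Rightarrow> ('a \<times> 'a) set \<Rightarrow> bool" where
  "und_connected V F \<longleftrightarrow>
     (\<forall>u\<in>V. \<forall>v\<in>V. (u, v) \<in> (restrict V F \<union> (restrict V F)\<inverse>)\<^sup>*)"

definition und_biconnected :: "'a set \<Rightarrow> ('a \<times> 'a) set \<Rightarrow> bool" where
  "und_biconnected V F \<longleftrightarrow> und_connected V F \<and> (\<forall>x\<in>V. und_connected (V - {x}) F)"

definition strongly_biconnected :: "'a set \<Rightarrow> ('a \<times> 'a) set \<Rightarrow> bool" where
  "strongly_biconnected V F \<longleftrightarrow> strongly_connected V F \<and> und_biconnected V F"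

definition two_edge_strongly_biconnected :: "'a set \<Rightarrow> ('a \<times> 'a) set \<Rightarrow> bool" where
  "two_edge_strongly_biconnected V F \<longleftrightarrow>
     strongly_biconnected V F \<and> card V \<ge> 3 \<and>
     (\<forall>e\<in>F. strongly_biconnected V (F - {e}))"

definition two_edge_connected :: "'a set \<Rightarrow> ('a \<times> 'a) set \<Rightarrow> bool" where
  "two_edge_connected V F \<longleftrightarrow>
     strongly_connected V F \<and> (\<forall>e\<in>F. strongly_connected V (F - {e}))"

definition b_bridges :: "'a set \<Rightarrow> ('a \<times> 'a) set \<Rightarrow> ('a \<times> 'a) set" where
  "b_bridges V F = {e \<in> F. \<not> strongly_biconnected V (F - {e})}"

definition min_2ec_spanning :: "'a set \<Rightarrow> ('a \<times> 'a) set \<Rightarrow> ('a \<times> 'a) set \<Rightarrow> bool" where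
  "min_2ec_spanning V E U \<longleftrightarrow> U \<subseteq> E \<and> two_edge_connected V U \<and>
     (\<forall>e\<in>U. \<not> two_edge_connected V (U - {e}))"

definition sb_component :: "'a set \<Rightarrow> ('a \<times> 'a) set \<Rightarrow> 'a set \<Rightarrow> ('a \<times> 'a) set \<Rightarrow> bool" where
  "sb_component V F S A \<longleftrightarrow>
     S \<subseteq> V \<and> A \<subseteq> F \<inter> (S \<times> S) \<and> strongly_biconnected S A \<and>
     \<not> (\<exists>S' A'. S' \<subseteq> V \<and> A' \<subseteq> F \<inter> (S' \<times> S') \<and> strongly_biconnected S' A' \<and>
            S \<subseteq> S' \<and> A \<subseteq> A' \<and> (S, A) \<noteq> (S', A'))"

definition same_sbc :: "'a set \<Rightarrow> ('a \<times> 'a) set \<Rightarrow> 'a \<Rightarrow> 'a \<Rightarrow> bool" where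
  "same_sbc V F v w \<longleftrightarrow> (\<exists>S A. sb_component V F S A \<and> v \<in> S \<and> w \<in> S)"

text \<open>One while-loop of steps (3)/(4): starting from edge set X, while the underlying
undirected graph of (V, X - B) is not biconnected, add an edge (v,w) of E - X whose
endpoints are in different strongly biconnected components of (V, X - B); ends in Y.
(Step 3 uses B = {}, step 4 uses B = {t}.)\<close>
inductive aug_loop :: "'a set \<Rightarrow> ('a \<times> 'a) set \<Rightarrow> ('a \<times> 'a) set \<Rightarrow>
                       ('a \<times> 'a) set \<Rightarrow> ('a \<times> 'a) set \<Rightarrow> bool"
  for V E B where
  stop: "und_biconnected V (X - B) \<Longrightarrow> aug_loop V E B X X"
| extend: "\<not> und_biconnected V (X - B) \<Longrightarrow> (v, w) \<in> E - X \<Longrightarrow>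
        \<not> same_sbc V (X - B) v w \<Longrightarrow> aug_loop V E B (insert (v, w) X) Y \<Longrightarrow>
        aug_loop V E B X Y"

inductive step4 :: "'a set \<Rightarrow> ('a \<times> 'a) set \<Rightarrow> ('a \<times> 'a) list \<Rightarrow>
                    ('a \<times> 'a) set \<Rightarrow> ('a \<times> 'a) set \<Rightarrow> bool"
  for V E where
  nil4: "step4 V E [] X X"
| cons4: "aug_loop V E {t} X Y \<Longrightarrow> step4 V E ts Y Z \<Longrightarrow> step4 V E (t # ts) X Z"

definition algA_output :: "'a set \<Rightarrow> ('a \<times> 'a) set \<Rightarrow> ('a \<times> 'a) set \<Rightarrow> ('a \<times> 'a) set \<Rightarrow> bool" where
  "algA_output V E U Out \<longleftrightarrow> min_2ec_spanning V E U \<and>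
     ((two_edge_strongly_biconnected V U \<and> Out = U) \<or>
      (\<not> two_edge_strongly_biconnected V U \<and>
        (\<exists>X3 ts. aug_loop V E {} U X3 \<and> distinct ts \<and> set ts = b_bridges V X3 \<and>
                 step4 V E ts X3 Out)))"

end

theory Submission
  imports Defs
begin


definition urel :: "'a set \<Rightarrow> ('a \<times> 'a) set \<Rightarrow> ('a \<times> 'a) set" where
  "urel W F = restrict W F \<union> (restrict W F)\<inverse>"

lemma und_connected_urel: "und_connected V F \<longleftrightarrow> (\<forall>u\<in>V. \<forall>v\<in>V. (u, v) \<in> (urel V F)\<^sup>*)"
  unfolding und_connected_def urel_def by simp

lemma restrict_mono: "W \<subseteq> W' \<Longrightarrow> F \<subseteq> F' \<Longrightarrow> restrict W F \<subseteq> restrict W' F'"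
  unfolding restrict_def by auto

lemma urel_mono: "W \<subseteq> W' \<Longrightarrow> F \<subseteq> F' \<Longrightarrow> urel W F \<subseteq> urel W' F'"
  unfolding urel_def restrict_def by auto

lemma restrict_urel: "W \<subseteq> W' \<Longrightarrow> F \<subseteq> F' \<Longrightarrow> restrict W F \<subseteq> urel W' F'"
  unfolding urel_def restrict_def by auto

lemma rt_restrict_urel: "(x,y) \<in> (restrict W F)\<^sup>* \<Longrightarrow> W \<subseteq> W' \<Longrightarrow> F \<subseteq> F' \<Longrightarrow> (x,y) \<in> (urel W' F')\<^sup>*"
  using rtrancl_mono[OF restrict_urel] by blast

lemma rt_restrict_mono: "(x,y) \<in> (restrict W F)\<^sup>* \<Longrightarrow> W \<subseteq> W' \<Longrightarrow> F \<subseteq> F' \<Longrightarrow> (x,y) \<in> (restrict W' F')\<^sup>*"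
  using rtrancl_mono[OF restrict_mono] by blast

lemma rt_urel_mono: "(x,y) \<in> (urel W F)\<^sup>* \<Longrightarrow> W \<subseteq> W' \<Longrightarrow> F \<subseteq> F' \<Longrightarrow> (x,y) \<in> (urel W' F')\<^sup>*"
  using rtrancl_mono[OF urel_mono] by blast

lemma urel_sym: "(x,y) \<in> urel W F \<Longrightarrow> (y,x) \<in> urel W F"
  unfolding urel_def by auto

lemma urel_edge: "(x,y) \<in> F \<or> (y,x) \<in> F \<Longrightarrow> x \<in> W \<Longrightarrow> y \<in> W \<Longrightarrow> (x,y) \<in> urel W F"
  unfolding urel_def restrict_def by auto

lemma restrict_edge: "(x,y) \<in> F \<Longrightarrow> x \<in> W \<Longrightarrow> y \<in> W \<Longrightarrow> (x,y) \<in> restrict W F"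
  unfolding restrict_def by auto

lemma restrict_in: "(x,y) \<in> restrict W F \<longleftrightarrow> (x,y) \<in> F \<and> x \<in> W \<and> y \<in> W"
  unfolding restrict_def by auto

lemma urel_in: "(x,y) \<in> urel W F \<longleftrightarrow> ((x,y) \<in> F \<or> (y,x) \<in> F) \<and> x \<in> W \<and> y \<in> W"
  unfolding urel_def restrict_def by auto

lemma urel_rt_sym: "(x,y) \<in> (urel W F)\<^sup>* \<Longrightarrow> (y,x) \<in> (urel W F)\<^sup>*"
proof (induction rule: rtrancl_induct)
  case base then show ?case by simp
next
  case (step y z)
  have "(z,y) \<in> urel W F" using step(2) by (rule urel_sym)
  then show ?case using step(3) by (rule converse_rtrancl_into_rtrancl)
qed

lemma rt_in_P: "(a,b) \<in> (R \<inter> P \<times> P)\<^sup>* \<Longrightarrow> a \<in> P \<Longrightarrow> b \<in> P"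
  by (induction rule: rtrancl_induct) auto
lemma exit_lemma0:
  assumes "(a,b) \<in> R\<^sup>*" "a \<in> P"
  shows "(a,b) \<in> (R \<inter> P \<times> P)\<^sup>* \<or> (\<exists>y y'. y \<in> P \<and> y' \<notin> P \<and> (y,y') \<in> R \<and> (a,y) \<in> (R \<inter> P \<times> P)\<^sup>*)"
  using assms(1)
proof (induction rule: rtrancl_induct)
  case base then show ?case by simp
next
  case (step y z)
  from step(3) show ?case
  proof
    assume h: "(a, y) \<in> (R \<inter> P \<times> P)\<^sup>*"
    then have yP: "y \<in> P" using rt_in_P assms(2) by metis
    show ?thesis
    proof (cases "z \<in> P")
      case True
      then have "(y,z) \<in> R \<inter> P \<times> P" using yP step(2) by simp
      then have "(a,z) \<in> (R \<inter> P \<times> P)\<^sup>*" using h by (rule rtrancl_into_rtrancl[rotated])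
      then show ?thesis by (rule disjI1)
    next
      case False
      have "y \<in> P \<and> z \<notin> P \<and> (y,z) \<in> R \<and> (a,y) \<in> (R \<inter> P \<times> P)\<^sup>*" using h yP step(2) False by simp
      then show ?thesis by (intro disjI2 exI)
    qed
  next
    assume "\<exists>y y'. y \<in> P \<and> y' \<notin> P \<and> (y, y') \<in> R \<and> (a, y) \<in> (R \<inter> P \<times> P)\<^sup>*"
    then show ?thesis by (rule disjI2)
  qed
qed

lemma exit_lemma:
  assumes "(a,b) \<in> R\<^sup>*" "a \<in> P" "b \<notin> P"
  shows "\<exists>y y'. y \<in> P \<and> y' \<notin> P \<and> (y,y') \<in> R \<and> (a,y) \<in> (R \<inter> P \<times> P)\<^sup>*"
proof -
  have "(a,b) \<notin> (R \<inter> P \<times> P)\<^sup>*" using rt_in_P assms(2,3) by metis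
  then show ?thesis using exit_lemma0[OF assms(1,2)] by simp
qed


definition dout :: "('a \<times> 'a) set \<Rightarrow> 'a set \<Rightarrow> ('a \<times> 'a) set" where
  "dout U X = {e \<in> U. fst e \<in> X \<and> snd e \<notin> X}"
definition din :: "('a \<times> 'a) set \<Rightarrow> 'a set \<Rightarrow> ('a \<times> 'a) set" where
  "din U X = {e \<in> U. fst e \<notin> X \<and> snd e \<in> X}"

lemma sc_exit:
  assumes "strongly_connected V F" "X \<subseteq> V" "a \<in> X" "b \<in> V" "b \<notin> X"
  shows "\<exists>e\<in>F. fst e \<in> X \<and> snd e \<notin> X \<and> snd e \<in> V"
proof -
  have "a \<in> V" using assms by blast
  then have "(a,b) \<in> (restrict V F)\<^sup>*" using assms(1,4) unfolding strongly_connected_def by blast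
  from exit_lemma[OF this assms(3,5)] obtain y y' where
    "y \<in> X" "y' \<notin> X" "(y,y') \<in> restrict V F" by blast
  then show ?thesis unfolding restrict_def by force
qed

lemma two_ec_sc: "two_edge_connected V U \<Longrightarrow> strongly_connected V (U - {f})"
  unfolding two_edge_connected_def by (cases "f \<in> U") auto

lemma cut2:
  assumes "two_edge_connected V U" "finite U" "X \<subseteq> V" "X \<noteq> {}" "\<not> V \<subseteq> X"
  shows "2 \<le> card (dout U X)"
proof -
  obtain a where a: "a \<in> X" using assms(4) by blast
  obtain b where b: "b \<in> V" "b \<notin> X" using assms(5) by blast
  have sc: "strongly_connected V U" using assms(1) unfolding two_edge_connected_def by simp
  obtain e1 where e1: "e1 \<in> U" "fst e1 \<in> X" "snd e1 \<notin> X" using sc_exit[OF sc assms(3) a b] by blast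
  obtain e2 where e2: "e2 \<in> U - {e1}" "fst e2 \<in> X" "snd e2 \<notin> X"
    using sc_exit[OF two_ec_sc[OF assms(1), of e1] assms(3) a b] by blast
  have "{e1, e2} \<subseteq> dout U X" using e1 e2 unfolding dout_def by auto
  moreover have "finite (dout U X)" using assms(2) unfolding dout_def by simp
  ultimately have "card {e1,e2} \<le> card (dout U X)" by (rule card_mono[rotated])
  moreover have "card {e1,e2} = 2" using e2 by auto
  ultimately show ?thesis by simp
qed

lemma din_dout: "U \<subseteq> V \<times> V \<Longrightarrow> X \<subseteq> V \<Longrightarrow> din U X = dout U (V - X)"
  unfolding din_def dout_def by auto

lemma cut2_in:
  assumes "two_edge_connected V U" "finite U" "U \<subseteq> V \<times> V" "X \<subseteq> V" "X \<noteq> {}" "\<not> V \<subseteq> X"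
  shows "2 \<le> card (din U X)"
proof -
  have "din U X = dout U (V - X)" using din_dout assms by blast
  moreover have "2 \<le> card (dout U (V - X))"
    by (rule cut2[OF assms(1,2)]) (use assms in auto)
  ultimately show ?thesis by simp
qed

lemma critical:
  assumes "min_2ec_spanning V E U" "E \<subseteq> V \<times> V" "e \<in> U"
  shows "\<exists>X. X \<subseteq> V \<and> X \<noteq> {} \<and> \<not> V \<subseteq> X \<and> e \<in> dout U X \<and> card (dout U X) \<le> 2"
proof -
  have UE: "U \<subseteq> E" and tec: "two_edge_connected V U" and nt: "\<not> two_edge_connected V (U - {e})"
    using assms unfolding min_2ec_spanning_def by auto
  have UV: "U \<subseteq> V \<times> V" using UE assms(2) by blast
  have "strongly_connected V (U - {e})" using two_ec_sc[OF tec] .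
  then obtain f where f: "f \<in> U - {e}" "\<not> strongly_connected V (U - {e} - {f})"
    using nt unfolding two_edge_connected_def by blast
  then obtain a b where ab: "a \<in> V" "b \<in> V" "(a,b) \<notin> (restrict V (U - {e} - {f}))\<^sup>*"
    unfolding strongly_connected_def by blast
  define X where "X = {y \<in> V. (a,y) \<in> (restrict V (U - {e} - {f}))\<^sup>*}"
  have XV: "X \<subseteq> V" unfolding X_def by blast
  have aX: "a \<in> X" unfolding X_def using ab by simp
  have bX: "b \<notin> X" unfolding X_def using ab by simp
  have sub: "dout U X \<subseteq> {e,f}"
  proof
    fix g assume g: "g \<in> dout U X"
    obtain p q where pq: "g = (p,q)" by force
    have p: "p \<in> X" and q: "q \<notin> X" and gU: "g \<in> U" using g pq unfolding dout_def by auto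
    have qV: "q \<in> V" using gU UV pq by auto
    show "g \<in> {e,f}"
    proof (rule ccontr)
      assume "g \<notin> {e,f}"
      then have "(p,q) \<in> restrict V (U - {e} - {f})" using gU pq p XV qV unfolding restrict_def by auto
      moreover have "(a,p) \<in> (restrict V (U - {e} - {f}))\<^sup>*" using p unfolding X_def by simp
      ultimately have "(a,q) \<in> (restrict V (U - {e} - {f}))\<^sup>*" by (meson rtrancl.rtrancl_into_rtrancl)
      then have "q \<in> X" unfolding X_def using qV by simp
      then show False using q by simp
    qed
  qed
  have "card (dout U X) \<le> card {e,f}" using sub by (rule card_mono[rotated]) simp
  also have "\<dots> \<le> 2" by (simp add: card_insert_if)
  finally have c2: "card (dout U X) \<le> 2" .
  obtain g where g: "g \<in> U - {f}" "fst g \<in> X" "snd g \<notin> X"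
    using sc_exit[OF two_ec_sc[OF tec, of f] XV aX ab(2) bX] by blast
  then have "g \<in> dout U X" unfolding dout_def by simp
  then have "g = e" using sub g by auto
  then have "e \<in> dout U X" using \<open>g \<in> dout U X\<close> by simp
  moreover have "X \<noteq> {}" using aX by blast
  moreover have "\<not> V \<subseteq> X" using bX ab(2) by blast
  ultimately show ?thesis using XV c2 by (intro exI[of _ X]) simp
qed

lemma card_ind: "finite U \<Longrightarrow> card {e \<in> U. P e} = (\<Sum>e\<in>U. if P e then 1 else 0)"
  by (simp add: sum.If_cases Int_def)

lemma submod_din:
  assumes "finite U"
  shows "card (din U (S \<inter> T)) + card (din U (S \<union> T)) \<le> card (din U S) + card (din U T)"
proof -
  have "card (din U (S \<inter> T)) + card (din U (S \<union> T)) =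
     (\<Sum>e\<in>U. (if fst e \<notin> S \<inter> T \<and> snd e \<in> S \<inter> T then 1 else 0) + (if fst e \<notin> S \<union> T \<and> snd e \<in> S \<union> T then 1 else (0::nat)))"
    unfolding din_def card_ind[OF assms] sum.distrib by simp
  also have "\<dots> \<le> (\<Sum>e\<in>U. (if fst e \<notin> S \<and> snd e \<in> S then 1 else 0) + (if fst e \<notin> T \<and> snd e \<in> T then 1 else (0::nat)))"
    by (rule sum_mono) auto
  also have "\<dots> = card (din U S) + card (din U T)"
    unfolding din_def card_ind[OF assms] sum.distrib by simp
  finally show ?thesis .
qed

lemma submod_dout:
  assumes "finite U"
  shows "card (dout U (S \<inter> T)) + card (dout U (S \<union> T)) \<le> card (dout U S) + card (dout U T)"
proof -
  have "card (dout U (S \<inter> T)) + card (dout U (S \<union> T)) =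
     (\<Sum>e\<in>U. (if fst e \<in> S \<inter> T \<and> snd e \<notin> S \<inter> T then 1 else 0) + (if fst e \<in> S \<union> T \<and> snd e \<notin> S \<union> T then 1 else (0::nat)))"
    unfolding dout_def card_ind[OF assms] sum.distrib by simp
  also have "\<dots> \<le> (\<Sum>e\<in>U. (if fst e \<in> S \<and> snd e \<notin> S then 1 else 0) + (if fst e \<in> T \<and> snd e \<notin> T then 1 else (0::nat)))"
    by (rule sum_mono) auto
  also have "\<dots> = card (dout U S) + card (dout U T)"
    unfolding dout_def card_ind[OF assms] sum.distrib by simp
  finally show ?thesis .
qed

lemma three_elems:
  assumes "2 < card A"
  shows "\<exists>a b c. a \<in> A \<and> b \<in> A \<and> c \<in> A \<and> a \<noteq> b \<and> a \<noteq> c \<and> b \<noteq> c"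
proof -
  have fin: "finite A" using assms card.infinite by fastforce
  obtain a where a: "a \<in> A" using assms by fastforce
  have "1 < card (A - {a})" using assms a fin by (simp add: card_Diff_singleton)
  then obtain b where b: "b \<in> A - {a}" by (metis card.empty ex_in_conv not_less_zero)
  have "0 < card (A - {a} - {b})" using \<open>1 < card (A - {a})\<close> b fin by (simp add: card_Diff_singleton)
  then obtain c where c: "c \<in> A - {a} - {b}" by (metis card.empty ex_in_conv less_irrefl)
  show ?thesis using a b c by blast
qed


definition typeI :: "'a set \<Rightarrow> ('a \<times> 'a) set \<Rightarrow> 'a \<Rightarrow> ('a \<times> 'a) \<Rightarrow> bool" where
  "typeI V U r e \<longleftrightarrow> (\<exists>Y. Y \<subseteq> V \<and> r \<notin> Y \<and> snd e \<in> Y \<and> fst e \<notin> Y \<and> card (din U Y) \<le> 2)"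
definition typeII :: "'a set \<Rightarrow> ('a \<times> 'a) set \<Rightarrow> 'a \<Rightarrow> ('a \<times> 'a) \<Rightarrow> bool" where
  "typeII V U r e \<longleftrightarrow> (\<exists>X. X \<subseteq> V \<and> r \<notin> X \<and> fst e \<in> X \<and> snd e \<notin> X \<and> card (dout U X) \<le> 2)"

lemma meet_din:
  assumes "two_edge_connected V U" "finite U" "U \<subseteq> V \<times> V" "r \<in> V"
    "Y1 \<subseteq> V" "Y2 \<subseteq> V" "r \<notin> Y1" "r \<notin> Y2" "v \<in> Y1" "card (din U Y1) \<le> 2" "card (din U Y2) \<le> 2"
  shows "card (din U (Y1 \<inter> Y2)) \<le> 2"
proof -
  have "2 \<le> card (din U (Y1 \<union> Y2))"
    by (rule cut2_in[OF assms(1,2,3)]) (use assms in auto)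
  then show ?thesis using submod_din[OF assms(2), of Y1 Y2] assms(10,11) by linarith
qed

lemma meet_dout:
  assumes "two_edge_connected V U" "finite U" "r \<in> V"
    "X1 \<subseteq> V" "X2 \<subseteq> V" "r \<notin> X1" "r \<notin> X2" "v \<in> X1" "card (dout U X1) \<le> 2" "card (dout U X2) \<le> 2"
  shows "card (dout U (X1 \<inter> X2)) \<le> 2"
proof -
  have "2 \<le> card (dout U (X1 \<union> X2))"
    by (rule cut2[OF assms(1,2)]) (use assms in auto)
  then show ?thesis using submod_dout[OF assms(2), of X1 X2] assms(9,10) by linarith
qed

lemma typeI_bound:
  assumes "two_edge_connected V U" "finite U" "U \<subseteq> V \<times> V" "r \<in> V"
  shows "card {e \<in> U. snd e = v \<and> typeI V U r e} \<le> 2"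
proof (rule ccontr)
  assume "\<not> ?thesis"
  then obtain e1 e2 e3 where e: "e1 \<in> {e \<in> U. snd e = v \<and> typeI V U r e}"
    "e2 \<in> {e \<in> U. snd e = v \<and> typeI V U r e}" "e3 \<in> {e \<in> U. snd e = v \<and> typeI V U r e}"
    "e1 \<noteq> e2" "e1 \<noteq> e3" "e2 \<noteq> e3"
    using three_elems[of "{e \<in> U. snd e = v \<and> typeI V U r e}"] by auto
  obtain Y1 where Y1: "Y1 \<subseteq> V" "r \<notin> Y1" "snd e1 \<in> Y1" "fst e1 \<notin> Y1" "card (din U Y1) \<le> 2"
    using e(1) unfolding typeI_def by blast
  obtain Y2 where Y2: "Y2 \<subseteq> V" "r \<notin> Y2" "snd e2 \<in> Y2" "fst e2 \<notin> Y2" "card (din U Y2) \<le> 2"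
    using e(2) unfolding typeI_def by blast
  obtain Y3 where Y3: "Y3 \<subseteq> V" "r \<notin> Y3" "snd e3 \<in> Y3" "fst e3 \<notin> Y3" "card (din U Y3) \<le> 2"
    using e(3) unfolding typeI_def by blast
  have v: "snd e1 = v" "snd e2 = v" "snd e3 = v" using e by auto
  have c12: "card (din U (Y1 \<inter> Y2)) \<le> 2"
    by (rule meet_din[OF assms Y1(1) Y2(1) Y1(2) Y2(2) Y1(3) Y1(5) Y2(5)])
  have c123: "card (din U (Y1 \<inter> Y2 \<inter> Y3)) \<le> 2"
    by (rule meet_din[OF assms _ Y3(1) _ Y3(2) _ c12 Y3(5)]) (use Y1 Y2 v in auto)
  have "{e1,e2,e3} \<subseteq> din U (Y1 \<inter> Y2 \<inter> Y3)"
    using e Y1 Y2 Y3 v unfolding din_def by auto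
  moreover have "finite (din U (Y1 \<inter> Y2 \<inter> Y3))" using assms(2) unfolding din_def by simp
  ultimately have "card {e1,e2,e3} \<le> card (din U (Y1 \<inter> Y2 \<inter> Y3))" by (rule card_mono[rotated])
  moreover have "card {e1,e2,e3} = 3" using e(4,5,6) by simp
  ultimately show False using c123 by simp
qed

lemma typeII_bound:
  assumes "two_edge_connected V U" "finite U" "r \<in> V"
  shows "card {e \<in> U. fst e = v \<and> typeII V U r e} \<le> 2"
proof (rule ccontr)
  assume "\<not> ?thesis"
  then obtain e1 e2 e3 where e: "e1 \<in> {e \<in> U. fst e = v \<and> typeII V U r e}"
    "e2 \<in> {e \<in> U. fst e = v \<and> typeII V U r e}" "e3 \<in> {e \<in> U. fst e = v \<and> typeII V U r e}"
    "e1 \<noteq> e2" "e1 \<noteq> e3" "e2 \<noteq> e3"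
    using three_elems[of "{e \<in> U. fst e = v \<and> typeII V U r e}"] by auto
  obtain Y1 where Y1: "Y1 \<subseteq> V" "r \<notin> Y1" "fst e1 \<in> Y1" "snd e1 \<notin> Y1" "card (dout U Y1) \<le> 2"
    using e(1) unfolding typeII_def by blast
  obtain Y2 where Y2: "Y2 \<subseteq> V" "r \<notin> Y2" "fst e2 \<in> Y2" "snd e2 \<notin> Y2" "card (dout U Y2) \<le> 2"
    using e(2) unfolding typeII_def by blast
  obtain Y3 where Y3: "Y3 \<subseteq> V" "r \<notin> Y3" "fst e3 \<in> Y3" "snd e3 \<notin> Y3" "card (dout U Y3) \<le> 2"
    using e(3) unfolding typeII_def by blast
  have v: "fst e1 = v" "fst e2 = v" "fst e3 = v" using e by auto
  have c12: "card (dout U (Y1 \<inter> Y2)) \<le> 2"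
    by (rule meet_dout[OF assms Y1(1) Y2(1) Y1(2) Y2(2) Y1(3) Y1(5) Y2(5)])
  have c123: "card (dout U (Y1 \<inter> Y2 \<inter> Y3)) \<le> 2"
    by (rule meet_dout[OF assms _ Y3(1) _ Y3(2) _ c12 Y3(5)]) (use Y1 Y2 v in auto)
  have "{e1,e2,e3} \<subseteq> dout U (Y1 \<inter> Y2 \<inter> Y3)"
    using e Y1 Y2 Y3 v unfolding dout_def by auto
  moreover have "finite (dout U (Y1 \<inter> Y2 \<inter> Y3))" using assms(2) unfolding dout_def by simp
  ultimately have "card {e1,e2,e3} \<le> card (dout U (Y1 \<inter> Y2 \<inter> Y3))" by (rule card_mono[rotated])
  moreover have "card {e1,e2,e3} = 3" using e(4,5,6) by simp
  ultimately show False using c123 by simp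
qed

lemma mader:
  assumes "min_2ec_spanning V E U" "E \<subseteq> V \<times> V" "finite V" "r \<in> V"
  shows "card U \<le> 4 * (card V - 1)"
proof -
  have UE: "U \<subseteq> E" and tec: "two_edge_connected V U"
    using assms unfolding min_2ec_spanning_def by auto
  have UV: "U \<subseteq> V \<times> V" using UE assms(2) by blast
  have finU: "finite U" using UV assms(3) finite_subset by blast
  define A where "A = (\<lambda>v. {e \<in> U. snd e = v \<and> typeI V U r e})"
  define B where "B = (\<lambda>v. {e \<in> U. fst e = v \<and> typeII V U r e})"
  have cover: "U \<subseteq> (\<Union>v\<in>V-{r}. A v) \<union> (\<Union>v\<in>V-{r}. B v)"
  proof
    fix e assume eU: "e \<in> U"
    obtain X where X: "X \<subseteq> V" "X \<noteq> {}" "\<not> V \<subseteq> X" "e \<in> dout U X" "card (dout U X) \<le> 2"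
      using critical[OF assms(1,2) eU] by blast
    have fe: "fst e \<in> X" "snd e \<notin> X" using X(4) unfolding dout_def by auto
    have eV: "fst e \<in> V" "snd e \<in> V" using eU UV by auto
    show "e \<in> (\<Union>v\<in>V-{r}. A v) \<union> (\<Union>v\<in>V-{r}. B v)"
    proof (cases "r \<in> X")
      case False
      then have "typeII V U r e" unfolding typeII_def using X fe by blast
      moreover have "fst e \<noteq> r" using False fe by auto
      ultimately have "e \<in> B (fst e)" "fst e \<in> V - {r}" unfolding B_def using eU eV by auto
      then show ?thesis by blast
    next
      case True
      have "din U (V - X) = dout U (V - (V - X))" using din_dout[OF UV, of "V - X"] by simp
      also have "V - (V - X) = X" using X(1) by blast
      finally have d: "din U (V - X) = dout U X" .
      have "typeI V U r e" unfolding typeI_def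
        by (rule exI[of _ "V - X"]) (use True fe eV d X(5) in auto)
      moreover have "snd e \<noteq> r" using True fe by auto
      ultimately have "e \<in> A (snd e)" "snd e \<in> V - {r}" unfolding A_def using eU eV by auto
      then show ?thesis by blast
    qed
  qed
  have finA: "finite ((\<Union>v\<in>V-{r}. A v) \<union> (\<Union>v\<in>V-{r}. B v))"
  proof (rule finite_subset[OF _ finU])
    show "(\<Union>v\<in>V-{r}. A v) \<union> (\<Union>v\<in>V-{r}. B v) \<subseteq> U" unfolding A_def B_def by auto
  qed
  have "card U \<le> card ((\<Union>v\<in>V-{r}. A v) \<union> (\<Union>v\<in>V-{r}. B v))"
    by (rule card_mono[OF finA cover])
  also have "\<dots> \<le> card (\<Union>v\<in>V-{r}. A v) + card (\<Union>v\<in>V-{r}. B v)" by (rule card_Un_le)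
  also have "\<dots> \<le> (\<Sum>v\<in>V-{r}. card (A v)) + (\<Sum>v\<in>V-{r}. card (B v))"
    using card_UN_le[of "V - {r}" A] card_UN_le[of "V - {r}" B] assms(3) by simp
  also have "\<dots> \<le> (\<Sum>v\<in>V-{r}. 2) + (\<Sum>v\<in>V-{r}. 2)"
    using typeI_bound[OF tec finU UV assms(4)] typeII_bound[OF tec finU assms(4)]
    unfolding A_def B_def by (intro add_mono sum_mono) auto
  also have "\<dots> = 4 * (card V - 1)" using assms(3,4) by simp
  finally show ?thesis .
qed


lemma und_hub:
  assumes "Q \<subseteq> T" "Q \<noteq> {}" "und_connected Q F" "\<forall>p\<in>T. \<exists>q\<in>Q. (p,q) \<in> (urel T F)\<^sup>*"
  shows "und_connected T F"
  unfolding und_connected_urel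
proof (intro ballI)
  fix p1 p2 assume p: "p1 \<in> T" "p2 \<in> T"
  obtain q1 where q1: "q1 \<in> Q" "(p1,q1) \<in> (urel T F)\<^sup>*" using assms(4) p(1) by meson
  obtain q2 where q2: "q2 \<in> Q" "(p2,q2) \<in> (urel T F)\<^sup>*" using assms(4) p(2) by meson
  have "(q1,q2) \<in> (urel Q F)\<^sup>*" using assms(3) q1 q2 unfolding und_connected_urel by meson
  then have "(q1,q2) \<in> (urel T F)\<^sup>*" using assms(1) by (rule rt_urel_mono) simp
  moreover have "(q2,p2) \<in> (urel T F)\<^sup>*" using q2(2) by (rule urel_rt_sym)
  ultimately show "(p1,p2) \<in> (urel T F)\<^sup>*" using q1(2) by (meson rtrancl_trans)
qed

lemma sc_hub:
  assumes "\<forall>p\<in>T. (p,h) \<in> (restrict T F)\<^sup>* \<and> (h,p) \<in> (restrict T F)\<^sup>*"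
  shows "strongly_connected T F"
  unfolding strongly_connected_def
proof (intro ballI)
  fix p1 p2 assume "p1 \<in> T" "p2 \<in> T"
  then have "(p1,h) \<in> (restrict T F)\<^sup>*" "(h,p2) \<in> (restrict T F)\<^sup>*" using assms by blast+
  then show "(p1,p2) \<in> (restrict T F)\<^sup>*" by (rule rtrancl_trans)
qed

lemma ear_bicon:
  assumes ub: "und_biconnected S F" and ab: "a \<in> S" "b \<in> S" "a \<noteq> b" and disj: "S \<inter> W = {}"
    and p1: "\<forall>z\<in>W. (a,z) \<in> (restrict (insert a W) F)\<^sup>* \<and> (z,b) \<in> (restrict (insert b W) F)\<^sup>*"
    and p2: "\<forall>x\<in>W. \<forall>z\<in>W-{x}. \<exists>s\<in>S. (z,s) \<in> (urel (S \<union> W - {x}) F)\<^sup>*"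
  shows "und_biconnected (S \<union> W) F"
proof -
  have ucS: "und_connected S F" and ucx: "\<forall>x\<in>S. und_connected (S - {x}) F"
    using ub unfolding und_biconnected_def by auto
  have c1: "und_connected (S \<union> W) F"
  proof (rule und_hub[of S])
    show "S \<subseteq> S \<union> W" "S \<noteq> {}" "und_connected S F" using ab ucS by auto
    show "\<forall>p\<in>S \<union> W. \<exists>q\<in>S. (p, q) \<in> (urel (S \<union> W) F)\<^sup>*"
    proof
      fix p assume "p \<in> S \<union> W"
      then show "\<exists>q\<in>S. (p, q) \<in> (urel (S \<union> W) F)\<^sup>*"
      proof
        assume "p \<in> S" then show ?thesis by blast
      next
        assume "p \<in> W"
        then have "(p,b) \<in> (restrict (insert b W) F)\<^sup>*" using p1 by blast
        then have "(p,b) \<in> (urel (S \<union> W) F)\<^sup>*" by (rule rt_restrict_urel) (use ab in auto)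
        then show ?thesis using ab by blast
      qed
    qed
  qed
  have c2: "und_connected (S \<union> W - {x}) F" if x: "x \<in> S \<union> W" for x
  proof (cases "x \<in> S")
    case True
    have xW: "x \<notin> W" using True disj by blast
    show ?thesis
    proof (rule und_hub[of "S - {x}"])
      show "S - {x} \<subseteq> S \<union> W - {x}" by blast
      show "S - {x} \<noteq> {}" using ab by blast
      show "und_connected (S - {x}) F" using ucx True by blast
      show "\<forall>p\<in>S \<union> W - {x}. \<exists>q\<in>S - {x}. (p, q) \<in> (urel (S \<union> W - {x}) F)\<^sup>*"
      proof
        fix p assume p: "p \<in> S \<union> W - {x}"
        show "\<exists>q\<in>S - {x}. (p, q) \<in> (urel (S \<union> W - {x}) F)\<^sup>*"
        proof (cases "p \<in> S")
          case True then show ?thesis using p by blast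
        next
          case False
          then have pW: "p \<in> W" using p by blast
          show ?thesis
          proof (cases "x = b")
            case False
            have "(p,b) \<in> (restrict (insert b W) F)\<^sup>*" using p1 pW by blast
            then have "(p,b) \<in> (urel (S \<union> W - {x}) F)\<^sup>*" by (rule rt_restrict_urel) (use ab xW False in auto)
            then show ?thesis using ab False by blast
          next
            case True
            then have xa: "x \<noteq> a" using ab by blast
            have "(a,p) \<in> (restrict (insert a W) F)\<^sup>*" using p1 pW by blast
            then have "(a,p) \<in> (urel (S \<union> W - {x}) F)\<^sup>*" by (rule rt_restrict_urel) (use ab xW xa in auto)
            then have "(p,a) \<in> (urel (S \<union> W - {x}) F)\<^sup>*" by (rule urel_rt_sym)
            then show ?thesis using ab xa by blast
          qed
        qed
      qed
    qed
  next
    case False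
    then have xW: "x \<in> W" using x by blast
    show ?thesis
    proof (rule und_hub[of S])
      show "S \<subseteq> S \<union> W - {x}" using False by blast
      show "S \<noteq> {}" "und_connected S F" using ab ucS by auto
      show "\<forall>p\<in>S \<union> W - {x}. \<exists>q\<in>S. (p, q) \<in> (urel (S \<union> W - {x}) F)\<^sup>*"
      proof
        fix p assume p: "p \<in> S \<union> W - {x}"
        show "\<exists>q\<in>S. (p, q) \<in> (urel (S \<union> W - {x}) F)\<^sup>*"
        proof (cases "p \<in> S")
          case True then show ?thesis by blast
        next
          case False
          then have "p \<in> W - {x}" using p by blast
          then show ?thesis using p2 xW by blast
        qed
      qed
    qed
  qed
  show ?thesis unfolding und_biconnected_def using c1 c2 by blast
qed

lemma path_between:
  assumes "(x,y) \<in> (restrict W F)\<^sup>*"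
  shows "(y,t) \<in> (restrict W F)\<^sup>* \<Longrightarrow>
    (x,y) \<in> (restrict {q\<in>W. (x,q) \<in> (restrict W F)\<^sup>* \<and> (q,t) \<in> (restrict W F)\<^sup>*} F)\<^sup>*"
  using assms
proof (induction rule: rtrancl_induct)
  case base then show ?case by simp
next
  case (step y z)
  have yz: "(y,z) \<in> F" "y \<in> W" "z \<in> W" using step(2) unfolding restrict_def by auto
  have yt: "(y,t) \<in> (restrict W F)\<^sup>*" using step(2) step(4) by (rule converse_rtrancl_into_rtrancl)
  have IH: "(x,y) \<in> (restrict {q\<in>W. (x,q) \<in> (restrict W F)\<^sup>* \<and> (q,t) \<in> (restrict W F)\<^sup>*} F)\<^sup>*"
    using step(3)[OF yt] .
  have xz: "(x,z) \<in> (restrict W F)\<^sup>*" using step(1) step(2) by (rule rtrancl_into_rtrancl)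
  have "(y,z) \<in> restrict {q\<in>W. (x,q) \<in> (restrict W F)\<^sup>* \<and> (q,t) \<in> (restrict W F)\<^sup>*} F"
    using yz step(1) yt xz step(4) by (simp add: restrict_in)
  then show ?case using IH by (rule rtrancl_into_rtrancl[rotated])
qed

lemma shortcut:
  assumes Z: "Z \<subseteq> W - {x}" and xW: "x \<in> W"
    and closed: "\<forall>y\<in>Z. \<forall>y'\<in>W-{x}. ((y,y') \<in> F \<or> (y',y) \<in> F) \<longrightarrow> y' \<in> Z"
    and c1: "c1 \<in> W - Z"
    and path: "(c1,y) \<in> (restrict W F)\<^sup>*"
  shows "(y \<in> W - Z \<longrightarrow> (c1,y) \<in> (restrict (W-Z) F)\<^sup>*) \<and> (y \<in> Z \<longrightarrow> (c1,x) \<in> (restrict (W-Z) F)\<^sup>*)"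
  using path
proof (induction rule: rtrancl_induct)
  case base then show ?case using c1 by simp
next
  case (step y z)
  have yz: "(y,z) \<in> F" "y \<in> W" "z \<in> W" using step(2) unfolding restrict_def by auto
  have xZ: "x \<in> W - Z" using Z xW by blast
  show ?case
  proof (intro conjI impI)
    assume zW: "z \<in> W - Z"
    show "(c1, z) \<in> (restrict (W - Z) F)\<^sup>*"
    proof (cases "y \<in> Z")
      case False
      then have "(c1,y) \<in> (restrict (W - Z) F)\<^sup>*" using step(3) yz by blast
      moreover have "(y,z) \<in> restrict (W - Z) F" using False zW yz unfolding restrict_def by simp
      ultimately show ?thesis by (rule rtrancl_into_rtrancl)
    next
      case True
      have "z = x"
      proof (rule ccontr)
        assume "z \<noteq> x"
        then have "z \<in> Z" using closed True yz zW by blast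
        then show False using zW by blast
      qed
      then show ?thesis using step(3) True by blast
    qed
  next
    assume zZ: "z \<in> Z"
    show "(c1, x) \<in> (restrict (W - Z) F)\<^sup>*"
    proof (cases "y \<in> Z")
      case True
      then show ?thesis using step(3) by blast
    next
      case False
      have "y = x"
      proof (rule ccontr)
        assume "y \<noteq> x"
        then have "y \<in> Z" using closed zZ yz by blast
        then show False using False by blast
      qed
      then show ?thesis using step(3) False yz by blast
    qed
  qed
qed


lemma min_card_exists:
  assumes "P (W0 :: 'b set)"
  shows "\<exists>W. P W \<and> (\<forall>W'. P W' \<longrightarrow> card W \<le> card W')"
proof -
  have "\<exists>n. \<exists>W. P W \<and> card W = n" using assms by blast
  then obtain n where n: "\<exists>W. P W \<and> card W = n" and least: "\<forall>m<n. \<not> (\<exists>W. P W \<and> card W = m)"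
    using exists_least_iff[of "\<lambda>n. \<exists>W. P W \<and> card W = n"] by blast
  then obtain W where W: "P W" "card W = n" by blast
  have "\<forall>W'. P W' \<longrightarrow> card W \<le> card W'"
  proof (intro allI impI)
    fix W' assume "P W'"
    then show "card W \<le> card W'" using least W(2) not_le by blast
  qed
  then show ?thesis using W(1) by blast
qed

lemma ear_exists:
  assumes finC: "finite C" and disj: "C \<inter> S = {}" and ab: "a \<in> S" "b \<in> S"
    and c: "c1 \<in> C" "c2 \<in> C" "(a,c1) \<in> F" "(c1,c2) \<in> (restrict C F)\<^sup>*" "(c2,b) \<in> F"
  shows "\<exists>W. W \<subseteq> C \<and> W \<noteq> {} \<and>
    (\<forall>z\<in>W. (a,z) \<in> (restrict (insert a W) F)\<^sup>* \<and> (z,b) \<in> (restrict (insert b W) F)\<^sup>*) \<and>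
    (\<forall>x\<in>W. \<forall>z\<in>W-{x}. \<exists>s\<in>S. (z,s) \<in> (urel (S \<union> W - {x}) F)\<^sup>*)"
proof -
  define P where "P = (\<lambda>W. W \<subseteq> C \<and> (\<exists>d1\<in>W. \<exists>d2\<in>W. (a,d1) \<in> F \<and> (d1,d2) \<in> (restrict W F)\<^sup>* \<and> (d2,b) \<in> F))"
  have "P C" unfolding P_def using c by blast
  then obtain W where PW: "P W" and minW: "\<forall>W'. P W' \<longrightarrow> card W \<le> card W'"
    using min_card_exists[of P] by blast
  have WC: "W \<subseteq> C" using PW unfolding P_def by blast
  have finW: "finite W" using WC finC finite_subset by blast
  obtain d1 d2 where d: "d1 \<in> W" "d2 \<in> W" "(a,d1) \<in> F" "(d1,d2) \<in> (restrict W F)\<^sup>*" "(d2,b) \<in> F"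
    using PW unfolding P_def by blast
  have aW: "a \<notin> W" "b \<notin> W" using WC disj ab by blast+
  define M where "M = {q\<in>W. (d1,q) \<in> (restrict W F)\<^sup>* \<and> (q,d2) \<in> (restrict W F)\<^sup>*}"
  have "(d1,d2) \<in> (restrict M F)\<^sup>*" unfolding M_def using path_between[OF d(4) rtrancl_refl] .
  moreover have "d1 \<in> M" "d2 \<in> M" unfolding M_def using d by auto
  moreover have "M \<subseteq> C" unfolding M_def using WC by blast
  ultimately have "P M" unfolding P_def using d(3,5) by blast
  then have "card W \<le> card M" using minW by blast
  moreover have "M \<subseteq> W" unfolding M_def by blast
  ultimately have MW: "M = W" using finW by (meson card_seteq)
  have p1: "\<forall>z\<in>W. (a,z) \<in> (restrict (insert a W) F)\<^sup>* \<and> (z,b) \<in> (restrict (insert b W) F)\<^sup>*"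
  proof
    fix z assume "z \<in> W"
    then have z: "(d1,z) \<in> (restrict W F)\<^sup>*" "(z,d2) \<in> (restrict W F)\<^sup>*" using MW unfolding M_def by blast+
    have "(a,d1) \<in> restrict (insert a W) F" using d by (simp add: restrict_in)
    moreover have "(d1,z) \<in> (restrict (insert a W) F)\<^sup>*" using z(1) by (rule rt_restrict_mono) auto
    ultimately have 1: "(a,z) \<in> (restrict (insert a W) F)\<^sup>*" by (rule converse_rtrancl_into_rtrancl)
    have "(d2,b) \<in> restrict (insert b W) F" using d by (simp add: restrict_in)
    moreover have "(z,d2) \<in> (restrict (insert b W) F)\<^sup>*" using z(2) by (rule rt_restrict_mono) auto
    ultimately have 2: "(z,b) \<in> (restrict (insert b W) F)\<^sup>*" by (rule rtrancl_into_rtrancl[rotated])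
    show "(a,z) \<in> (restrict (insert a W) F)\<^sup>* \<and> (z,b) \<in> (restrict (insert b W) F)\<^sup>*" using 1 2 by simp
  qed
  have p2: "\<forall>x\<in>W. \<forall>z\<in>W-{x}. \<exists>s\<in>S. (z,s) \<in> (urel (S \<union> W - {x}) F)\<^sup>*"
  proof (intro ballI)
    fix x z assume xW: "x \<in> W" and zW: "z \<in> W - {x}"
    show "\<exists>s\<in>S. (z,s) \<in> (urel (S \<union> W - {x}) F)\<^sup>*"
    proof (rule ccontr)
      assume nz: "\<not> (\<exists>s\<in>S. (z,s) \<in> (urel (S \<union> W - {x}) F)\<^sup>*)"
      define Z where "Z = {y \<in> W - {x}. (z,y) \<in> (urel (W - {x}) F)\<^sup>*}"
      have Zsub: "Z \<subseteq> W - {x}" unfolding Z_def by blast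
      have zZ: "z \<in> Z" unfolding Z_def using zW by simp
      have xa: "x \<noteq> a" "x \<noteq> b" using xW aW by blast+
      have d1Z: "d1 \<notin> Z"
      proof
        assume "d1 \<in> Z"
        then have "(z,d1) \<in> (urel (W - {x}) F)\<^sup>*" unfolding Z_def by blast
        then have "(z,d1) \<in> (urel (S \<union> W - {x}) F)\<^sup>*" by (rule rt_urel_mono) auto
        moreover have "(d1,a) \<in> urel (S \<union> W - {x}) F"
          using d(3) \<open>d1 \<in> Z\<close> Zsub ab xa by (simp add: urel_in) blast
        ultimately have "(z,a) \<in> (urel (S \<union> W - {x}) F)\<^sup>*" by (rule rtrancl_into_rtrancl)
        then show False using nz ab by blast
      qed
      have d2Z: "d2 \<notin> Z"
      proof
        assume "d2 \<in> Z"
        then have "(z,d2) \<in> (urel (W - {x}) F)\<^sup>*" unfolding Z_def by blast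
        then have "(z,d2) \<in> (urel (S \<union> W - {x}) F)\<^sup>*" by (rule rt_urel_mono) auto
        moreover have "(d2,b) \<in> urel (S \<union> W - {x}) F"
          using d(5) \<open>d2 \<in> Z\<close> Zsub ab xa by (simp add: urel_in) blast
        ultimately have "(z,b) \<in> (urel (S \<union> W - {x}) F)\<^sup>*" by (rule rtrancl_into_rtrancl)
        then show False using nz ab by blast
      qed
      have closed: "\<forall>y\<in>Z. \<forall>y'\<in>W-{x}. ((y,y') \<in> F \<or> (y',y) \<in> F) \<longrightarrow> y' \<in> Z"
      proof (intro ballI impI)
        fix y y' assume y: "y \<in> Z" and y': "y' \<in> W - {x}" and e: "(y,y') \<in> F \<or> (y',y) \<in> F"
        have "(z,y) \<in> (urel (W - {x}) F)\<^sup>*" using y unfolding Z_def by blast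
        moreover have "(y,y') \<in> urel (W - {x}) F" using e y y' Zsub by (simp add: urel_in) blast
        ultimately have "(z,y') \<in> (urel (W - {x}) F)\<^sup>*" by (rule rtrancl_into_rtrancl)
        then show "y' \<in> Z" unfolding Z_def using y' by blast
      qed
      have "(d2 \<in> W - Z \<longrightarrow> (d1,d2) \<in> (restrict (W-Z) F)\<^sup>*) \<and> (d2 \<in> Z \<longrightarrow> (d1,x) \<in> (restrict (W-Z) F)\<^sup>*)"
        by (rule shortcut[OF Zsub xW closed _ d(4)]) (use d d1Z in blast)
      then have "(d1,d2) \<in> (restrict (W-Z) F)\<^sup>*" using d d2Z by blast
      then have "P (W - Z)" unfolding P_def using d d1Z d2Z WC by blast
      then have "card W \<le> card (W - Z)" using minW by blast
      moreover have "card (W - Z) < card W"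
        by (rule psubset_card_mono[OF finW]) (use zZ Zsub in blast)
      ultimately show False by simp
    qed
  qed
  have "W \<noteq> {}" using d by blast
  then show ?thesis using WC p1 p2 by blast
qed


lemma Restr_restrict: "P \<subseteq> V \<Longrightarrow> restrict V F \<inter> P \<times> P = restrict P F"
  unfolding restrict_def by auto

lemma Restr_conv: "R\<inverse> \<inter> P \<times> P = (R \<inter> P \<times> P)\<inverse>"
  by auto

lemma und_connected_single: "und_connected {y} F"
  unfolding und_connected_def by simp

lemma und_biconnected_pair:
  assumes "(u,v) \<in> F" "u \<noteq> v"
  shows "und_biconnected {u,v} F"
proof -
  have e1: "(u,v) \<in> urel {u,v} F" "(v,u) \<in> urel {u,v} F" using assms by (auto simp: urel_in)
  have "und_connected {u,v} F" unfolding und_connected_urel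
    using e1 by (auto intro: r_into_rtrancl)
  moreover have "und_connected ({u,v} - {x}) F" if "x \<in> {u,v}" for x
  proof -
    have "{u,v} - {x} = {v} \<or> {u,v} - {x} = {u}" using that assms(2) by auto
    then show ?thesis using und_connected_single by metis
  qed
  ultimately show ?thesis unfolding und_biconnected_def by blast
qed

lemma ear_path:
  assumes "(a,b) \<in> (restrict V F)\<^sup>*" "a \<in> V" "b \<in> V" "a \<noteq> b" "(a,b) \<notin> F"
  shows "\<exists>c1 c2. c1 \<in> V-{a,b} \<and> c2 \<in> V-{a,b} \<and> (a,c1) \<in> F \<and> (c1,c2) \<in> (restrict (V-{a,b}) F)\<^sup>* \<and> (c2,b) \<in> F"
proof -
  obtain y y' where y: "y \<in> V-{b}" "y' \<notin> V-{b}" "(y,y') \<in> restrict V F"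
     "(a,y) \<in> (restrict V F \<inter> (V-{b}) \<times> (V-{b}))\<^sup>*"
    using exit_lemma[OF assms(1), of "V-{b}"] assms by blast
  have y'b: "y' = b" using y(2,3) by (auto simp: restrict_in)
  have ay: "(a,y) \<in> (restrict (V-{b}) F)\<^sup>*" using y(4) Restr_restrict[of "V-{b}" V F] by simp
  have yb: "(y,b) \<in> F" using y(3) y'b by (simp add: restrict_in)
  have "y \<noteq> a" using yb assms(5) by blast
  then have yP: "y \<in> V-{a,b}" using y(1) by blast
  have "(y,a) \<in> ((restrict (V-{b}) F)\<inverse>)\<^sup>*" using ay by (rule rtrancl_converseI)
  then obtain c c' where cc: "c \<in> V-{a,b}" "c' \<notin> V-{a,b}" "(c,c') \<in> (restrict (V-{b}) F)\<inverse>"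
     "(y,c) \<in> ((restrict (V-{b}) F)\<inverse> \<inter> (V-{a,b}) \<times> (V-{a,b}))\<^sup>*"
    using exit_lemma[of y a "(restrict (V-{b}) F)\<inverse>" "V-{a,b}"] yP by blast
  have c'a: "c' = a" using cc(2,3) by (auto simp: restrict_in)
  have ac: "(a,c) \<in> F" using cc(3) c'a by (simp add: restrict_in)
  have "(y,c) \<in> ((restrict (V-{b}) F \<inter> (V-{a,b}) \<times> (V-{a,b}))\<inverse>)\<^sup>*" using cc(4) Restr_conv by metis
  then have "(c,y) \<in> (restrict (V-{b}) F \<inter> (V-{a,b}) \<times> (V-{a,b}))\<^sup>*" by (rule rtrancl_converseD)
  moreover have "restrict (V-{b}) F \<inter> (V-{a,b}) \<times> (V-{a,b}) = restrict (V-{a,b}) F"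
    by (rule Restr_restrict) blast
  ultimately have "(c,y) \<in> (restrict (V-{a,b}) F)\<^sup>*" by simp
  then show ?thesis using cc(1) yP ac yb by blast
qed


lemma no_sep_S:
  assumes finV: "finite V" and sc: "strongly_connected V F" and vw: "v \<in> V" "w \<in> V" "v \<noteq> w"
    and nosep: "\<forall>x\<in>V-{v,w}. (v,w) \<in> (urel (V-{x}) F)\<^sup>*"
  shows "\<exists>S. S \<subseteq> V \<and> v \<in> S \<and> w \<in> S \<and> strongly_biconnected S F"
proof -
  have scV: "\<And>p q. p \<in> V \<Longrightarrow> q \<in> V \<Longrightarrow> (p,q) \<in> (restrict V F)\<^sup>*"
    using sc unfolding strongly_connected_def by blast
  obtain u where u: "u \<in> V" "u \<noteq> v" "(u,v) \<in> F" "(w,u) \<in> (urel (V-{v}) F)\<^sup>*"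
  proof -
    obtain y y' where y: "y \<in> V-{v}" "y' \<notin> V-{v}" "(y,y') \<in> restrict V F"
       "(w,y) \<in> (restrict V F \<inter> (V-{v}) \<times> (V-{v}))\<^sup>*"
      using exit_lemma[OF scV[OF vw(2) vw(1)], of "V-{v}"] vw by blast
    have "y' = v" using y(2,3) by (auto simp: restrict_in)
    then have "(y,v) \<in> F" using y(3) by (simp add: restrict_in)
    moreover have "(w,y) \<in> (restrict (V-{v}) F)\<^sup>*" using y(4) Restr_restrict[of "V-{v}" V F] by simp
    then have "(w,y) \<in> (urel (V-{v}) F)\<^sup>*" by (rule rt_restrict_urel) auto
    ultimately show ?thesis using that y(1) by blast
  qed
  define Sb where "Sb = {S. S \<subseteq> V \<and> u \<in> S \<and> v \<in> S \<and> strongly_biconnected S F}"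
  have base: "\<exists>S0. S0 \<in> Sb"
  proof (cases "(v,u) \<in> F")
    case True
    have "strongly_connected {u,v} F"
    proof (rule sc_hub[where h=u])
      show "\<forall>p\<in>{u, v}. (p, u) \<in> (restrict {u, v} F)\<^sup>* \<and> (u, p) \<in> (restrict {u, v} F)\<^sup>*"
        using True u(3) by (auto simp: restrict_in intro: r_into_rtrancl)
    qed
    then have "{u,v} \<in> Sb" unfolding Sb_def strongly_biconnected_def
      using und_biconnected_pair[OF u(3) u(2)] u(1) vw(1) by blast
    then show ?thesis by blast
  next
    case False
    obtain c1 c2 where c: "c1 \<in> V-{v,u}" "c2 \<in> V-{v,u}" "(v,c1) \<in> F" "(c1,c2) \<in> (restrict (V-{v,u}) F)\<^sup>*" "(c2,u) \<in> F"
      using ear_path[OF scV[OF vw(1) u(1)] vw(1) u(1) u(2)[symmetric] False] by blast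
    obtain W where W: "W \<subseteq> V-{v,u}" "W \<noteq> {}"
      "\<forall>z\<in>W. (v,z) \<in> (restrict (insert v W) F)\<^sup>* \<and> (z,u) \<in> (restrict (insert u W) F)\<^sup>*"
      "\<forall>x\<in>W. \<forall>z\<in>W-{x}. \<exists>s\<in>{u,v}. (z,s) \<in> (urel ({u,v} \<union> W - {x}) F)\<^sup>*"
      using ear_exists[of "V-{v,u}" "{u,v}" v u c1 c2 F] finV c by blast
    have ub: "und_biconnected ({u,v} \<union> W) F"
      by (rule ear_bicon[OF und_biconnected_pair[OF u(3) u(2)] _ _ u(2)[symmetric] _ W(3) W(4)]) (use W(1) in auto)
    obtain z0 where z0: "z0 \<in> W" using W(2) by blast
    let ?T = "{u,v} \<union> W"
    have m1: "\<And>p q. (p,q) \<in> (restrict (insert v W) F)\<^sup>* \<Longrightarrow> (p,q) \<in> (restrict ?T F)\<^sup>*"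
      by (erule rt_restrict_mono) auto
    have m2: "\<And>p q. (p,q) \<in> (restrict (insert u W) F)\<^sup>* \<Longrightarrow> (p,q) \<in> (restrict ?T F)\<^sup>*"
      by (erule rt_restrict_mono) auto
    have uv: "(u,v) \<in> (restrict ?T F)\<^sup>*" using u(3) by (auto simp: restrict_in intro: r_into_rtrancl)
    have vu: "(v,u) \<in> (restrict ?T F)\<^sup>*"
      using m1[of v z0] m2[of z0 u] W(3) z0 by (meson rtrancl_trans)
    have "strongly_connected ?T F"
    proof (rule sc_hub[where h=u])
      show "\<forall>p\<in>?T. (p, u) \<in> (restrict ?T F)\<^sup>* \<and> (u, p) \<in> (restrict ?T F)\<^sup>*"
      proof
        fix p assume p: "p \<in> ?T"
        show "(p, u) \<in> (restrict ?T F)\<^sup>* \<and> (u, p) \<in> (restrict ?T F)\<^sup>*"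
        proof (cases "p \<in> W")
          case True
          then have "(p,u) \<in> (restrict ?T F)\<^sup>*" "(v,p) \<in> (restrict ?T F)\<^sup>*" using m1 m2 W(3) by blast+
          then show ?thesis using uv by (meson rtrancl_trans)
        next
          case False
          then have "p = u \<or> p = v" using p by blast
          then show ?thesis using uv vu by auto
        qed
      qed
    qed
    then have "?T \<in> Sb" unfolding Sb_def strongly_biconnected_def using ub W(1) u(1) vw(1) by blast
    then show ?thesis by blast
  qed
  obtain k where k: "\<exists>S\<in>Sb. card S = k" and kmax: "\<forall>k'. (\<exists>S\<in>Sb. card S = k') \<longrightarrow> k' \<le> k"
  proof -
    obtain S0 where "S0 \<in> Sb" using base by blast
    moreover have "\<forall>k'. (\<exists>S\<in>Sb. card S = k') \<longrightarrow> k' \<le> card V"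
      unfolding Sb_def using finV card_mono by blast
    ultimately show ?thesis using that Nat.ex_has_greatest_nat[of "\<lambda>k. \<exists>S\<in>Sb. card S = k" "card S0" "card V"] by blast
  qed
  then obtain S where SSb: "S \<in> Sb" and Smax: "\<forall>S'\<in>Sb. card S' \<le> card S" by blast
  have SV: "S \<subseteq> V" and uS: "u \<in> S" and vS: "v \<in> S" and sbS: "strongly_biconnected S F"
    using SSb unfolding Sb_def by auto
  have scS: "strongly_connected S F" and ubS: "und_biconnected S F"
    using sbS unfolding strongly_biconnected_def by auto
  have finS: "finite S" using SV finV finite_subset by blast
  have "w \<in> S"
  proof (rule ccontr)
    assume wS: "w \<notin> S"
    define C where "C = {y \<in> V - S. (w,y) \<in> (urel (V-S) F)\<^sup>*}"
    have wC: "w \<in> C" unfolding C_def using wS vw by simp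
    have CV: "C \<subseteq> V - S" unfolding C_def by blast
    have finC: "finite C" using CV finV finite_subset by blast
    have CV': "C \<subseteq> V" using CV by blast
    have closedC: "\<forall>y\<in>C. \<forall>y'\<in>V-S. ((y,y') \<in> F \<or> (y',y) \<in> F) \<longrightarrow> y' \<in> C"
    proof (intro ballI impI)
      fix y y' assume y: "y \<in> C" and y': "y' \<in> V - S" and e: "(y,y') \<in> F \<or> (y',y) \<in> F"
      have "(w,y) \<in> (urel (V-S) F)\<^sup>*" using y unfolding C_def by blast
      moreover have "(y,y') \<in> urel (V-S) F" using e y y' CV by (simp add: urel_in) blast
      ultimately have "(w,y') \<in> (urel (V-S) F)\<^sup>*" by (rule rtrancl_into_rtrancl)
      then show "y' \<in> C" unfolding C_def using y' by blast
    qed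
    have notC_S: "\<forall>y\<in>C. \<forall>y'\<in>V-C. ((y,y') \<in> F \<or> (y',y) \<in> F) \<longrightarrow> y' \<in> S"
      using closedC by blast
    define inn where "inn = (\<lambda>c. {s\<in>S. \<exists>c'\<in>C. (s,c') \<in> F \<and> (c',c) \<in> (restrict C F)\<^sup>*})"
    define outt where "outt = (\<lambda>c. {s\<in>S. \<exists>c'\<in>C. (c,c') \<in> (restrict C F)\<^sup>* \<and> (c',s) \<in> F})"
    show False
    proof (cases "\<exists>c\<in>C. \<exists>a\<in>inn c. \<exists>b\<in>outt c. a \<noteq> b")
      case True
      then obtain c a b c1 c2 where abc: "c \<in> C" "a \<in> S" "b \<in> S" "a \<noteq> b" "c1 \<in> C" "(a,c1) \<in> F"
        "(c1,c) \<in> (restrict C F)\<^sup>*" "c2 \<in> C" "(c,c2) \<in> (restrict C F)\<^sup>*" "(c2,b) \<in> F"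
        unfolding inn_def outt_def by blast
      have "(c1,c2) \<in> (restrict C F)\<^sup>*" using abc(7,9) by (rule rtrancl_trans)
      then obtain W where W: "W \<subseteq> C" "W \<noteq> {}"
        "\<forall>z\<in>W. (a,z) \<in> (restrict (insert a W) F)\<^sup>* \<and> (z,b) \<in> (restrict (insert b W) F)\<^sup>*"
        "\<forall>x\<in>W. \<forall>z\<in>W-{x}. \<exists>s\<in>S. (z,s) \<in> (urel (S \<union> W - {x}) F)\<^sup>*"
        using ear_exists[OF finC _ abc(2,3,5,8,6) _ abc(10)] CV by blast
      have disj: "S \<inter> W = {}" using W(1) CV by blast
      have ub: "und_biconnected (S \<union> W) F"
        by (rule ear_bicon[OF ubS abc(2,3,4) disj W(3) W(4)])
      let ?T = "S \<union> W"
      have mS: "\<And>p q. (p,q) \<in> (restrict S F)\<^sup>* \<Longrightarrow> (p,q) \<in> (restrict ?T F)\<^sup>*"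
        by (erule rt_restrict_mono) auto
      have ma: "\<And>p q. (p,q) \<in> (restrict (insert a W) F)\<^sup>* \<Longrightarrow> (p,q) \<in> (restrict ?T F)\<^sup>*"
        by (erule rt_restrict_mono) (use abc(2) in auto)
      have mb: "\<And>p q. (p,q) \<in> (restrict (insert b W) F)\<^sup>* \<Longrightarrow> (p,q) \<in> (restrict ?T F)\<^sup>*"
        by (erule rt_restrict_mono) (use abc(3) in auto)
      have scSp: "\<And>p q. p \<in> S \<Longrightarrow> q \<in> S \<Longrightarrow> (p,q) \<in> (restrict S F)\<^sup>*"
        using scS unfolding strongly_connected_def by blast
      have "strongly_connected ?T F"
      proof (rule sc_hub[where h=b])
        show "\<forall>p\<in>?T. (p, b) \<in> (restrict ?T F)\<^sup>* \<and> (b, p) \<in> (restrict ?T F)\<^sup>*"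
        proof
          fix p assume p: "p \<in> ?T"
          show "(p, b) \<in> (restrict ?T F)\<^sup>* \<and> (b, p) \<in> (restrict ?T F)\<^sup>*"
          proof (cases "p \<in> W")
            case True
            then have "(p,b) \<in> (restrict ?T F)\<^sup>*" "(a,p) \<in> (restrict ?T F)\<^sup>*" using ma mb W(3) by blast+
            moreover have "(b,a) \<in> (restrict ?T F)\<^sup>*" using mS scSp abc(2,3) by blast
            ultimately show ?thesis by (meson rtrancl_trans)
          next
            case False
            then have "p \<in> S" using p by blast
            then show ?thesis using mS scSp abc(3) by blast
          qed
        qed
      qed
      then have "?T \<in> Sb" unfolding Sb_def strongly_biconnected_def using ub W(1) CV SV uS vS by blast
      then have "card ?T \<le> card S" using Smax by blast
      moreover have "card S < card ?T"
      proof (rule psubset_card_mono)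
        show "finite ?T" using finS finC W(1) finite_subset by blast
        show "S \<subset> ?T" using W(1,2) CV by blast
      qed
      ultimately show False by simp
    next
      case False
      then have B: "\<forall>c\<in>C. \<forall>a\<in>inn c. \<forall>b\<in>outt c. a = b" by blast
      have outne: "outt c \<noteq> {}" if c: "c \<in> C" for c
      proof -
        have "(c,u) \<in> (restrict V F)\<^sup>*" using scV c CV u(1) by blast
        then obtain y y' where y: "y \<in> C" "y' \<notin> C" "(y,y') \<in> restrict V F" "(c,y) \<in> (restrict V F \<inter> C \<times> C)\<^sup>*"
          using exit_lemma[of c u "restrict V F" C] c uS CV by blast
        have "(c,y) \<in> (restrict C F)\<^sup>*" using y(4) Restr_restrict[OF CV', of F] by simp
        moreover have "y' \<in> S" using notC_S y by (auto simp: restrict_in)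
        ultimately have "y' \<in> outt c" unfolding outt_def using y by (auto simp: restrict_in)
        then show ?thesis by blast
      qed
      have inne: "inn c \<noteq> {}" if c: "c \<in> C" for c
      proof -
        have "(u,c) \<in> (restrict V F)\<^sup>*" using scV c CV u(1) by blast
        then have "(c,u) \<in> ((restrict V F)\<inverse>)\<^sup>*" by (rule rtrancl_converseI)
        then obtain y y' where y: "y \<in> C" "y' \<notin> C" "(y,y') \<in> (restrict V F)\<inverse>" "(c,y) \<in> ((restrict V F)\<inverse> \<inter> C \<times> C)\<^sup>*"
          using exit_lemma[of c u "(restrict V F)\<inverse>" C] c uS CV by blast
        have "(c,y) \<in> ((restrict V F \<inter> C \<times> C)\<inverse>)\<^sup>*" using y(4) Restr_conv by metis
        then have "(y,c) \<in> (restrict V F \<inter> C \<times> C)\<^sup>*" by (rule rtrancl_converseD)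
        then have "(y,c) \<in> (restrict C F)\<^sup>*" using Restr_restrict[OF CV', of F] by simp
        moreover have "y' \<in> S" using notC_S y by (auto simp: restrict_in)
        ultimately have "y' \<in> inn c" unfolding inn_def using y by (auto simp: restrict_in)
        then show ?thesis by blast
      qed
      have sing: "\<exists>x. inn c = {x} \<and> outt c = {x}" if c: "c \<in> C" for c
      proof -
        obtain b0 where b0: "b0 \<in> outt c" using outne c by blast
        obtain a0 where a0: "a0 \<in> inn c" using inne c by blast
        have h1: "\<forall>a\<in>inn c. a = b0" using B c b0 by blast
        have h2: "\<forall>b\<in>outt c. b = a0" using B c a0 by metis
        have ab0: "a0 = b0" using h1 a0 by simp
        have "inn c = {b0}"
        proof (intro set_eqI iffI)
          fix y assume "y \<in> inn c" then show "y \<in> {b0}" using h1 by simp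
        next
          fix y assume "y \<in> {b0}" then show "y \<in> inn c" using a0 ab0 by simp
        qed
        moreover have "outt c = {b0}"
        proof (intro set_eqI iffI)
          fix y assume "y \<in> outt c" then show "y \<in> {b0}" using h2 ab0 by simp
        next
          fix y assume "y \<in> {b0}" then show "y \<in> outt c" using b0 by simp
        qed
        ultimately show ?thesis by blast
      qed
      have mono_inn: "inn c \<subseteq> inn c'" if "c \<in> C" "c' \<in> C" "(c,c') \<in> F" for c c'
      proof
        fix s assume "s \<in> inn c"
        then obtain c'' where c'': "s \<in> S" "c'' \<in> C" "(s,c'') \<in> F" "(c'',c) \<in> (restrict C F)\<^sup>*"
          unfolding inn_def by blast
        have "(c,c') \<in> restrict C F" using that by (simp add: restrict_in)
        with c''(4) have "(c'',c') \<in> (restrict C F)\<^sup>*" by (rule rtrancl_into_rtrancl)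
        then show "s \<in> inn c'" unfolding inn_def using c'' by blast
      qed
      have propag: "(w,y) \<in> (urel (V-S) F)\<^sup>* \<Longrightarrow> inn y = inn w" for y
      proof (induction rule: rtrancl_induct)
        case base then show ?case by simp
      next
        case (step y z)
        have yz: "y \<in> V - S" "z \<in> V - S" "(y,z) \<in> F \<or> (z,y) \<in> F" using step(2) by (auto simp: urel_in)
        have yC: "y \<in> C" unfolding C_def using step(1) yz by blast
        have zC: "z \<in> C" unfolding C_def using step(1) step(2) yz
          by (blast intro: rtrancl_into_rtrancl)
        obtain x1 where x1: "inn y = {x1}" using sing yC by blast
        obtain x2 where x2: "inn z = {x2}" using sing zC by blast
        have "inn y = inn z"
        proof (cases "(y,z) \<in> F")
          case True
          then show ?thesis using mono_inn[OF yC zC True] x1 x2 by auto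
        next
          case False
          then have "(z,y) \<in> F" using yz by blast
          then show ?thesis using mono_inn[OF zC yC] x1 x2 by auto
        qed
        then show ?case using step(3) by simp
      qed
      obtain x where x: "inn w = {x}" "outt w = {x}" using sing wC by blast
      have allx: "inn c = {x} \<and> outt c = {x}" if "c \<in> C" for c
      proof -
        have "inn c = {x}" using propag[of c] that x unfolding C_def by blast
        then show ?thesis using sing that by force
      qed
      have key: "\<forall>y\<in>C. \<forall>y'\<in>V-C. ((y,y') \<in> F \<or> (y',y) \<in> F) \<longrightarrow> y' = x"
      proof (intro ballI impI)
        fix y y' assume y: "y \<in> C" and y': "y' \<in> V - C" and e: "(y,y') \<in> F \<or> (y',y) \<in> F"
        have y'S: "y' \<in> S" using notC_S y y' e by blast
        show "y' = x"
        proof (cases "(y,y') \<in> F")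
          case True
          then have "y' \<in> outt y" unfolding outt_def using y y'S by blast
          then show ?thesis using allx y by blast
        next
          case False
          then have "(y',y) \<in> F" using e by blast
          then have "y' \<in> inn y" unfolding inn_def using y y'S by blast
          then show ?thesis using allx y by blast
        qed
      qed
      have xS: "x \<in> S" using x unfolding inn_def by blast
      have escape: "False" if t: "t \<in> V - C" and p: "(w,t) \<in> (urel (V-{x}) F)\<^sup>*" for t
      proof -
        obtain y y' where y: "y \<in> C" "y' \<notin> C" "(y,y') \<in> urel (V-{x}) F"
          using exit_lemma[OF p, of C] wC t by blast
        have "y' \<in> V - {x}" "(y,y') \<in> F \<or> (y',y) \<in> F" using y(3) by (auto simp: urel_in)
        then show False using key y by blast
      qed
      show False
      proof (cases "x = v")
        case True
        then show False using escape[of u] u(1,4) uS CV by blast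
      next
        case False
        have "x \<in> V - {v,w}" using xS SV False wS by blast
        then have "(v,w) \<in> (urel (V-{x}) F)\<^sup>*" using nosep by blast
        then have "(w,v) \<in> (urel (V-{x}) F)\<^sup>*" by (rule urel_rt_sym)
        then show False using escape[of v] vw(1) vS CV by blast
      qed
    qed
  qed
  then show ?thesis using SV vS sbS by blast
qed


lemma restrict_inter1: "restrict S (F \<inter> S \<times> S) = restrict S F"
  unfolding restrict_def by auto
lemma restrict_inter2: "restrict (S - X) (F \<inter> S \<times> S) = restrict (S - X) F"
  unfolding restrict_def by auto

lemma sb_restrict: "strongly_biconnected S (F \<inter> S \<times> S) = strongly_biconnected S F"
  unfolding strongly_biconnected_def strongly_connected_def und_biconnected_def und_connected_def
  by (simp only: restrict_inter1 restrict_inter2)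

lemma same_sbc_of_S:
  assumes finV: "finite V" and SV: "S \<subseteq> V" and vw: "v \<in> S" "w \<in> S" and sb: "strongly_biconnected S F"
  shows "same_sbc V F v w"
proof -
  define Q where "Q = (\<lambda>p::'a set \<times> ('a \<times> 'a) set. S \<subseteq> fst p \<and> fst p \<subseteq> V \<and> snd p \<subseteq> F \<inter> fst p \<times> fst p \<and> strongly_biconnected (fst p) (snd p))"
  define f where "f = (\<lambda>p::'a set \<times> ('a \<times> 'a) set. card (fst p) + card (snd p))"
  have Q0: "Q (S, F \<inter> S \<times> S)" unfolding Q_def using SV sb sb_restrict by auto
  have bound: "\<forall>k. (\<exists>p. Q p \<and> f p = k) \<longrightarrow> k \<le> card V + card (V \<times> V)"
  proof (intro allI impI)
    fix k assume "\<exists>p. Q p \<and> f p = k"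
    then obtain p where p: "Q p" "f p = k" by blast
    have "card (fst p) \<le> card V" using p(1) finV unfolding Q_def by (simp add: card_mono)
    moreover have "card (snd p) \<le> card (V \<times> V)"
      using p(1) finV unfolding Q_def by (intro card_mono) auto
    ultimately show "k \<le> card V + card (V \<times> V)" using p(2) unfolding f_def by simp
  qed
  obtain k where k: "\<exists>p. Q p \<and> f p = k" and kmax: "\<forall>k'. (\<exists>p. Q p \<and> f p = k') \<longrightarrow> k' \<le> k"
    using Nat.ex_has_greatest_nat[of "\<lambda>k. \<exists>p. Q p \<and> f p = k" "f (S, F \<inter> S \<times> S)" "card V + card (V \<times> V)"] Q0 bound
    by blast
  then obtain S' A' where QA: "Q (S',A')" and fk: "f (S',A') = k" by auto
  have S'V: "S' \<subseteq> V" and SS': "S \<subseteq> S'" and A': "A' \<subseteq> F \<inter> S' \<times> S'" and sb': "strongly_biconnected S' A'"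
    using QA unfolding Q_def by auto
  have "sb_component V F S' A'"
    unfolding sb_component_def
  proof (intro conjI S'V A' sb' notI)
    assume "\<exists>S'' A''. S'' \<subseteq> V \<and> A'' \<subseteq> F \<inter> S'' \<times> S'' \<and> strongly_biconnected S'' A'' \<and>
        S' \<subseteq> S'' \<and> A' \<subseteq> A'' \<and> (S', A') \<noteq> (S'', A'')"
    then obtain S'' A'' where h: "S'' \<subseteq> V" "A'' \<subseteq> F \<inter> S'' \<times> S''" "strongly_biconnected S'' A''"
        "S' \<subseteq> S''" "A' \<subseteq> A''" "(S', A') \<noteq> (S'', A'')" by blast
    have "Q (S'',A'')" unfolding Q_def using h SS' by auto
    then have le: "f (S'',A'') \<le> k" using kmax by blast
    have finS'': "finite S''" using h(1) finV finite_subset by blast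
    have finA'': "finite A''" using h(2) finS'' finite_subset[of A'' "S'' \<times> S''"] by blast
    have c1: "card S' \<le> card S''" using h(4) finS'' by (rule card_mono[rotated])
    have c2: "card A' \<le> card A''" using h(5) finA'' by (rule card_mono[rotated])
    have "card S' < card S'' \<or> card A' < card A''"
    proof (cases "S' = S''")
      case True
      then have "A' \<subset> A''" using h(5,6) by blast
      then show ?thesis using finA'' psubset_card_mono by blast
    next
      case False
      then have "S' \<subset> S''" using h(4) by blast
      then show ?thesis using finS'' psubset_card_mono by blast
    qed
    then have "k < f (S'',A'')" using fk c1 c2 unfolding f_def by auto
    then show False using le by simp
  qed
  then show ?thesis unfolding same_sbc_def using SS' vw by blast
qed

lemma not_same_sbc_sep:
  assumes "finite V" "strongly_connected V F" "v \<in> V" "w \<in> V" "v \<noteq> w" "\<not> same_sbc V F v w"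
  shows "\<exists>x\<in>V-{v,w}. (v,w) \<notin> (urel (V-{x}) F)\<^sup>*"
proof (rule ccontr)
  assume "\<not> ?thesis"
  then have "\<forall>x\<in>V-{v,w}. (v,w) \<in> (urel (V-{x}) F)\<^sup>*" by blast
  then obtain S where "S \<subseteq> V" "v \<in> S" "w \<in> S" "strongly_biconnected S F"
    using no_sep_S[OF assms(1-5)] by blast
  then have "same_sbc V F v w" using same_sbc_of_S[OF assms(1)] by blast
  then show False using assms(6) by blast
qed


definition ucomp :: "'a set \<Rightarrow> ('a \<times> 'a) set \<Rightarrow> 'a \<Rightarrow> 'a set" where
  "ucomp W F z = {y. (z,y) \<in> (urel W F)\<^sup>*}"

definition ncomp :: "'a set \<Rightarrow> ('a \<times> 'a) set \<Rightarrow> nat" where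
  "ncomp W F = card (ucomp W F ` W)"

definition Phi :: "'a set \<Rightarrow> ('a \<times> 'a) set \<Rightarrow> nat" where
  "Phi V F = (\<Sum>x\<in>V. ncomp (V - {x}) F)"

lemma ucomp_eq:
  assumes "(z,t) \<in> (urel W F)\<^sup>*"
  shows "ucomp W F z = ucomp W F t"
proof -
  have "(t,z) \<in> (urel W F)\<^sup>*" using assms by (rule urel_rt_sym)
  then show ?thesis unfolding ucomp_def using assms by (meson rtrancl_trans)
qed

lemma ucomp_eq_iff: "ucomp W F z = ucomp W F t \<Longrightarrow> (z,t) \<in> (urel W F)\<^sup>*"
proof -
  assume h: "ucomp W F z = ucomp W F t"
  have "t \<in> ucomp W F t" unfolding ucomp_def by simp
  then have "t \<in> ucomp W F z" using h by simp
  then show ?thesis unfolding ucomp_def by simp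
qed

lemma card_image_factor:
  assumes fin: "finite W" and fac: "\<forall>a\<in>W. \<forall>b\<in>W. f a = f b \<longrightarrow> g a = g b"
  shows "card (g ` W) \<le> card (f ` W)"
    and "(\<exists>a\<in>W. \<exists>b\<in>W. f a \<noteq> f b \<and> g a = g b) \<Longrightarrow> card (g ` W) < card (f ` W)"
proof -
  define h where "h = (\<lambda>C. g (SOME a. a \<in> W \<and> f a = C))"
  have hf: "h (f a) = g a" if "a \<in> W" for a
  proof -
    have "\<exists>a'. a' \<in> W \<and> f a' = f a" using that by blast
    then have "(SOME a'. a' \<in> W \<and> f a' = f a) \<in> W \<and> f (SOME a'. a' \<in> W \<and> f a' = f a) = f a"
      by (rule someI_ex)
    then show ?thesis unfolding h_def using fac that by metis
  qed
  have img: "g ` W = h ` (f ` W)"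
    using hf by (auto simp: image_image)
  show "card (g ` W) \<le> card (f ` W)" unfolding img by (rule card_image_le) (use fin in simp)
  assume "\<exists>a\<in>W. \<exists>b\<in>W. f a \<noteq> f b \<and> g a = g b"
  then obtain a b where ab: "a \<in> W" "b \<in> W" "f a \<noteq> f b" "g a = g b" by blast
  have "\<not> inj_on h (f ` W)"
  proof
    assume "inj_on h (f ` W)"
    moreover have "h (f a) = h (f b)" using hf ab by simp
    ultimately have "f a = f b" using ab by (meson image_eqI inj_onD)
    then show False using ab by simp
  qed
  then have "card (h ` (f ` W)) \<noteq> card (f ` W)" using inj_on_iff_eq_card fin by blast
  moreover have "card (h ` (f ` W)) \<le> card (f ` W)" by (rule card_image_le) (use fin in simp)
  ultimately show "card (g ` W) < card (f ` W)" unfolding img by simp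
qed

lemma ncomp_mono:
  assumes "finite W" "F \<subseteq> F'"
  shows "ncomp W F' \<le> ncomp W F"
  unfolding ncomp_def
proof (rule card_image_factor(1)[OF assms(1)])
  show "\<forall>a\<in>W. \<forall>b\<in>W. ucomp W F a = ucomp W F b \<longrightarrow> ucomp W F' a = ucomp W F' b"
  proof (intro ballI impI)
    fix a b assume "ucomp W F a = ucomp W F b"
    then have "(a,b) \<in> (urel W F)\<^sup>*" by (rule ucomp_eq_iff)
    then have "(a,b) \<in> (urel W F')\<^sup>*" by (rule rt_urel_mono) (use assms in auto)
    then show "ucomp W F' a = ucomp W F' b" by (rule ucomp_eq)
  qed
qed

lemma ncomp_strict:
  assumes "finite W" "v \<in> W" "w \<in> W" "(v,w) \<notin> (urel W F)\<^sup>*"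
  shows "ncomp W (insert (v,w) F) < ncomp W F"
  unfolding ncomp_def
proof (rule card_image_factor(2)[OF assms(1)])
  show "\<forall>a\<in>W. \<forall>b\<in>W. ucomp W F a = ucomp W F b \<longrightarrow> ucomp W (insert (v,w) F) a = ucomp W (insert (v,w) F) b"
  proof (intro ballI impI)
    fix a b assume "ucomp W F a = ucomp W F b"
    then have "(a,b) \<in> (urel W F)\<^sup>*" by (rule ucomp_eq_iff)
    then have "(a,b) \<in> (urel W (insert (v,w) F))\<^sup>*" by (rule rt_urel_mono) auto
    then show "ucomp W (insert (v,w) F) a = ucomp W (insert (v,w) F) b" by (rule ucomp_eq)
  qed
  have "(v,w) \<in> urel W (insert (v,w) F)" using assms(2,3) by (simp add: urel_in)
  then have "ucomp W (insert (v,w) F) v = ucomp W (insert (v,w) F) w" by (intro ucomp_eq r_into_rtrancl)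
  moreover have "ucomp W F v \<noteq> ucomp W F w" using ucomp_eq_iff[of W F v w] assms(4) by auto
  ultimately have hc: "ucomp W F v \<noteq> ucomp W F w \<and> ucomp W (insert (v,w) F) v = ucomp W (insert (v,w) F) w"
    by simp
  show "\<exists>a\<in>W. \<exists>b\<in>W. ucomp W F a \<noteq> ucomp W F b \<and> ucomp W (insert (v,w) F) a = ucomp W (insert (v,w) F) b"
  proof (rule bexI[where x=v])
    show "\<exists>b\<in>W. ucomp W F v \<noteq> ucomp W F b \<and> ucomp W (insert (v,w) F) v = ucomp W (insert (v,w) F) b"
    proof (rule bexI[where x=w])
      show "ucomp W F v \<noteq> ucomp W F w \<and> ucomp W (insert (v,w) F) v = ucomp W (insert (v,w) F) w" by (rule hc)
      show "w \<in> W" by (rule assms(3))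
    qed
    show "v \<in> W" by (rule assms(2))
  qed
qed

lemma Phi_strict:
  assumes "finite V" "v \<in> V" "w \<in> V" "x \<in> V - {v,w}" "(v,w) \<notin> (urel (V-{x}) F)\<^sup>*"
  shows "Phi V (insert (v,w) F) < Phi V F"
  unfolding Phi_def
proof (rule sum_strict_mono_ex1[OF assms(1)])
  show "\<forall>y\<in>V. ncomp (V - {y}) (insert (v, w) F) \<le> ncomp (V - {y}) F"
  proof
    fix y assume "y \<in> V"
    show "ncomp (V - {y}) (insert (v, w) F) \<le> ncomp (V - {y}) F"
      by (rule ncomp_mono) (use assms(1) in auto)
  qed
  have "ncomp (V - {x}) (insert (v, w) F) < ncomp (V - {x}) F"
    by (rule ncomp_strict) (use assms in auto)
  then show "\<exists>y\<in>V. ncomp (V - {y}) (insert (v, w) F) < ncomp (V - {y}) F"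
    using assms(4) by blast
qed

lemma Phi_lower:
  assumes "finite V" "2 \<le> card V"
  shows "card V \<le> Phi V F"
proof -
  have "ncomp (V - {x}) F \<ge> 1" if "x \<in> V" for x
  proof -
    have "card (V - {x}) \<ge> 1" using assms that by (simp add: card_Diff_singleton)
    then have "V - {x} \<noteq> {}" by (metis card.empty not_one_le_zero)
    then have "ucomp (V - {x}) F ` (V - {x}) \<noteq> {}" by blast
    then show ?thesis unfolding ncomp_def using assms(1) by (simp add: Suc_leI card_gt_0_iff)
  qed
  then have "(\<Sum>x\<in>V. (1::nat)) \<le> Phi V F" unfolding Phi_def by (intro sum_mono) auto
  then show ?thesis by simp
qed


lemma Phi_upper:
  assumes finV: "finite V" and uc: "und_connected V F" and r: "r \<in> V"
  shows "Phi V F + 1 \<le> 2 * card V"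
proof -
  let ?R = "urel V F"
  have reach: "(r,z) \<in> ?R\<^sup>*" if "z \<in> V" for z using uc r that unfolding und_connected_urel by blast
  define d where "d = (\<lambda>z. LEAST k. (r,z) \<in> ?R ^^ k)"
  have dpow: "(r,z) \<in> ?R ^^ (d z)" if "z \<in> V" for z
  proof -
    have "\<exists>k. (r,z) \<in> ?R ^^ k" using reach[OF that] rtrancl_power by blast
    then show ?thesis unfolding d_def by (rule LeastI_ex)
  qed
  have par: "\<exists>y. (y,z) \<in> ?R \<and> d y < d z" if z: "z \<in> V - {r}" for z
  proof (cases "d z")
    case 0
    then have "(r,z) \<in> ?R ^^ 0" using dpow z by (metis DiffD1)
    then show ?thesis using z by simp
  next
    case (Suc m)
    then have "(r,z) \<in> ?R ^^ Suc m" using dpow z by (metis DiffD1)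
    then obtain y where y: "(r,y) \<in> ?R ^^ m" "(y,z) \<in> ?R" by (rule relpow_Suc_E)
    have "d y \<le> m" unfolding d_def using y(1) by (rule Least_le)
    then have "d y < d z" using Suc by simp
    then show ?thesis using y(2) by (intro exI[of _ y] conjI)
  qed
  have "\<forall>z\<in>V-{r}. \<exists>y. (y,z) \<in> ?R \<and> d y < d z" using par by (intro ballI)
  then have "\<exists>p. \<forall>z\<in>V-{r}. (p z, z) \<in> ?R \<and> d (p z) < d z" by (rule bchoice)
  then obtain p where p: "\<forall>z\<in>V-{r}. (p z, z) \<in> ?R \<and> d (p z) < d z" by (elim exE)
  have pV: "p z \<in> V" if "z \<in> V - {r}" for z using p that by (auto simp: urel_in)
  define T where "T = (\<lambda>x. {y \<in> V-{r}. p y = x} \<union> {r})"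
  have cover: "\<exists>t\<in>T x. (z,t) \<in> (urel (V-{x}) F)\<^sup>*" if "z \<in> V - {x}" for x z
    using that
  proof (induction "d z" arbitrary: z rule: less_induct)
    case less
    show ?case
    proof (cases "z = r")
      case True
      then show ?thesis unfolding T_def by blast
    next
      case False
      then have zr: "z \<in> V - {r}" using less.prems by blast
      show ?thesis
      proof (cases "p z = x")
        case True
        then have "z \<in> T x" unfolding T_def using zr by blast
        then show ?thesis by blast
      next
        case False
        have pz: "p z \<in> V - {x}" using pV[OF zr] False by blast
        have "d (p z) < d z" using p zr by blast
        then obtain t where t: "t \<in> T x" "(p z, t) \<in> (urel (V-{x}) F)\<^sup>*" using less.hyps pz by blast
        have "(p z, z) \<in> ?R" using p zr by blast
        then have "(z, p z) \<in> urel (V-{x}) F" using pz less.prems by (auto simp: urel_in)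
        then have "(z,t) \<in> (urel (V-{x}) F)\<^sup>*" using t(2) by (rule converse_rtrancl_into_rtrancl)
        then show ?thesis using t(1) by blast
      qed
    qed
  qed
  have finT: "finite (T x)" for x unfolding T_def using finV by simp
  have nc: "ncomp (V - {x}) F \<le> card {y \<in> V-{r}. p y = x} + 1" for x
  proof -
    have "ucomp (V-{x}) F ` (V-{x}) \<subseteq> ucomp (V-{x}) F ` (T x)"
    proof
      fix C assume "C \<in> ucomp (V-{x}) F ` (V-{x})"
      then obtain z where z: "z \<in> V-{x}" "C = ucomp (V-{x}) F z" by blast
      from cover[OF z(1)] obtain t where t: "t \<in> T x" and zt: "(z,t) \<in> (urel (V-{x}) F)\<^sup>*" by (elim bexE)
      have "C = ucomp (V-{x}) F t" using z(2) ucomp_eq[OF zt] by simp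
      then show "C \<in> ucomp (V-{x}) F ` (T x)" using t by (rule image_eqI)
    qed
    then have "ncomp (V - {x}) F \<le> card (ucomp (V-{x}) F ` (T x))"
      unfolding ncomp_def by (rule card_mono[rotated]) (use finT in simp)
    also have "\<dots> \<le> card (T x)" using finT by (rule card_image_le)
    also have "\<dots> \<le> card {y \<in> V-{r}. p y = x} + card {r}" unfolding T_def by (rule card_Un_le)
    finally show ?thesis by simp
  qed
  have "Phi V F \<le> (\<Sum>x\<in>V. card {y \<in> V-{r}. p y = x} + 1)"
    unfolding Phi_def using nc by (intro sum_mono) auto
  also have "\<dots> = (\<Sum>x\<in>V. card {y \<in> V-{r}. p y = x}) + card V" by (subst sum.distrib) simp
  also have "(\<Sum>x\<in>V. card {y \<in> V-{r}. p y = x}) = card (V - {r})"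
  proof -
    have "(\<Sum>x\<in>V. sum (\<lambda>_. 1::nat) {y \<in> V-{r}. p y = x}) = sum (\<lambda>_. 1::nat) (V - {r})"
      by (rule sum.group) (use finV pV in auto)
    then show ?thesis by simp
  qed
  finally have "Phi V F \<le> card (V - {r}) + card V" .
  moreover have "card (V - {r}) + 1 = card V" using finV r by (simp add: card_Diff_singleton) (metis card_0_eq empty_iff Suc_pred neq0_conv)
  ultimately show ?thesis by simp
qed


lemma sc_mono: "strongly_connected V F \<Longrightarrow> F \<subseteq> F' \<Longrightarrow> strongly_connected V F'"
  unfolding strongly_connected_def
proof (intro ballI)
  fix u v assume "\<forall>u\<in>V. \<forall>v\<in>V. (u, v) \<in> (restrict V F)\<^sup>*" "F \<subseteq> F'" "u \<in> V" "v \<in> V"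
  then have "(u, v) \<in> (restrict V F)\<^sup>*" by simp
  then show "(u, v) \<in> (restrict V F')\<^sup>*" by (rule rt_restrict_mono) (use \<open>F \<subseteq> F'\<close> in auto)
qed

lemma sc_und: "strongly_connected V F \<Longrightarrow> und_connected V F"
  unfolding strongly_connected_def und_connected_urel
proof (intro ballI)
  fix u v assume "\<forall>u\<in>V. \<forall>v\<in>V. (u, v) \<in> (restrict V F)\<^sup>*" "u \<in> V" "v \<in> V"
  then have "(u, v) \<in> (restrict V F)\<^sup>*" by simp
  then show "(u, v) \<in> (urel V F)\<^sup>*" by (rule rt_restrict_urel) auto
qed

lemma uc_mono: "und_connected V F \<Longrightarrow> F \<subseteq> F' \<Longrightarrow> und_connected V F'"
  unfolding und_connected_urel
proof (intro ballI)
  fix u v assume "\<forall>u\<in>V. \<forall>v\<in>V. (u, v) \<in> (urel V F)\<^sup>*" "F \<subseteq> F'" "u \<in> V" "v \<in> V"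
  then have "(u, v) \<in> (urel V F)\<^sup>*" by simp
  then show "(u, v) \<in> (urel V F')\<^sup>*" by (rule rt_urel_mono) (use \<open>F \<subseteq> F'\<close> in auto)
qed

lemma ub_mono: "und_biconnected V F \<Longrightarrow> F \<subseteq> F' \<Longrightarrow> und_biconnected V F'"
  unfolding und_biconnected_def using uc_mono by metis

lemma loop_bound:
  assumes "aug_loop V E B X Y"
  shows "B = {t} \<Longrightarrow> finite V \<Longrightarrow> E \<subseteq> V \<times> V \<Longrightarrow> \<forall>v. (v,v) \<notin> E \<Longrightarrow> X \<subseteq> E \<Longrightarrow> t \<in> X \<Longrightarrow>
    strongly_connected V (X - {t}) \<Longrightarrow>
    card Y + Phi V (Y - {t}) \<le> card X + Phi V (X - {t}) \<and> X \<subseteq> Y \<and> Y \<subseteq> E"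
  using assms
proof (induction rule: aug_loop.induct)
  case (stop X) then show ?case by simp
next
  case (extend X v w Y)
  have B: "B = {t}" and finV: "finite V" and EV: "E \<subseteq> V \<times> V" and nl: "\<forall>v. (v,v) \<notin> E"
    and XE: "X \<subseteq> E" and tX: "t \<in> X" and sc: "strongly_connected V (X - {t})"
    using extend.prems by auto
  have vwE: "(v,w) \<in> E" "(v,w) \<notin> X" using extend.hyps(2) by auto
  have vV: "v \<in> V" "w \<in> V" using vwE EV by auto
  have vnw: "v \<noteq> w" using vwE nl by auto
  have vt: "(v,w) \<noteq> t" using vwE tX by auto
  let ?X' = "insert (v,w) X"
  have X'E: "?X' \<subseteq> E" using XE vwE by simp
  have tX': "t \<in> ?X'" using tX by simp
  have eq: "?X' - {t} = insert (v,w) (X - {t})" using vt by auto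
  have sc': "strongly_connected V (?X' - {t})" by (rule sc_mono[OF sc]) blast
  have IH: "card Y + Phi V (Y - {t}) \<le> card ?X' + Phi V (?X' - {t}) \<and> ?X' \<subseteq> Y \<and> Y \<subseteq> E"
    using extend.IH[OF B finV EV nl X'E tX' sc'] .
  have nss: "\<not> same_sbc V (X - {t}) v w" using extend.hyps(3) B by simp
  obtain x where x: "x \<in> V - {v,w}" "(v,w) \<notin> (urel (V-{x}) (X - {t}))\<^sup>*"
    using not_same_sbc_sep[OF finV sc vV vnw nss] by blast
  have "Phi V (insert (v,w) (X - {t})) < Phi V (X - {t})"
    by (rule Phi_strict[OF finV vV x])
  then have ph: "Phi V (?X' - {t}) < Phi V (X - {t})" using eq by simp
  have finX: "finite X" using XE EV finV finite_subset[of X "V \<times> V"] by blast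
  have "card ?X' = card X + 1" using finX vwE by simp
  then show ?case using IH ph by auto
qed

lemma aug_sub: "aug_loop V E B X Y \<Longrightarrow> X \<subseteq> E \<Longrightarrow> Y \<subseteq> E"
  by (induction rule: aug_loop.induct) auto

lemma step4_sub: "step4 V E ts X Z \<Longrightarrow> X \<subseteq> E \<Longrightarrow> Z \<subseteq> E"
  by (induction rule: step4.induct) (auto dest: aug_sub)

lemma step4_bound:
  assumes "step4 V E ts X Z"
  shows "finite V \<Longrightarrow> E \<subseteq> V \<times> V \<Longrightarrow> \<forall>v. (v,v) \<notin> E \<Longrightarrow> 2 \<le> card V \<Longrightarrow> U \<subseteq> X \<Longrightarrow> X \<subseteq> E \<Longrightarrow>
    set ts \<subseteq> U \<Longrightarrow> two_edge_connected V U \<Longrightarrow> card Z \<le> card X + length ts * (card V - 1)"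
  using assms
proof (induction rule: step4.induct)
  case (nil4 X) then show ?case by simp
next
  case (cons4 t X Y ts Z)
  have finV: "finite V" and EV: "E \<subseteq> V \<times> V" and nl: "\<forall>v. (v,v) \<notin> E" and n2: "2 \<le> card V"
    and UX: "U \<subseteq> X" and XE: "X \<subseteq> E" and tsU: "set (t # ts) \<subseteq> U" and tec: "two_edge_connected V U"
    using cons4.prems by auto
  have tX: "t \<in> X" using tsU UX by auto
  have sc: "strongly_connected V (X - {t})"
    by (rule sc_mono[OF two_ec_sc[OF tec, of t]]) (use UX in blast)
  have lb: "card Y + Phi V (Y - {t}) \<le> card X + Phi V (X - {t}) \<and> X \<subseteq> Y \<and> Y \<subseteq> E"
    by (rule loop_bound[OF cons4.hyps(1) refl finV EV nl XE tX sc])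
  obtain r where r: "r \<in> V" using n2 by (metis card.empty ex_in_conv not_numeral_le_zero)
  have up: "Phi V (X - {t}) + 1 \<le> 2 * card V" by (rule Phi_upper[OF finV sc_und[OF sc] r])
  have lo: "card V \<le> Phi V (Y - {t})" by (rule Phi_lower[OF finV n2])
  have cY: "card Y \<le> card X + (card V - 1)" using lb up lo by linarith
  have IH: "card Z \<le> card Y + length ts * (card V - 1)"
    by (rule cons4.IH[OF finV EV nl n2]) (use UX lb tsU tec in auto)
  show ?case using cY IH by simp
qed


lemma card_E_bound:
  assumes "finite V" "E \<subseteq> V \<times> V" "\<forall>v. (v, v) \<notin> E"
  shows "card E \<le> card V * (card V - 1)"
proof -
  have sub: "E \<subseteq> (\<Union>v\<in>V. {v} \<times> (V - {v}))" using assms(2,3) by auto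
  have fin: "finite (\<Union>v\<in>V. {v} \<times> (V - {v}))" using assms(1) by auto
  have "card E \<le> card (\<Union>v\<in>V. {v} \<times> (V - {v}))" by (rule card_mono[OF fin sub])
  also have "\<dots> \<le> (\<Sum>v\<in>V. card ({v} \<times> (V - {v})))" by (rule card_UN_le[OF assms(1)])
  also have "\<dots> = (\<Sum>v\<in>V. card V - 1)"
    by (rule sum.cong) (use assms(1) in \<open>auto simp: card_cartesian_product card_Diff_singleton\<close>)
  also have "\<dots> = card V * (card V - 1)" by simp
  finally show ?thesis .
qed

lemma card_U_lower:
  assumes "finite V" "U \<subseteq> V \<times> V" "strongly_connected V U" "2 \<le> card V"
  shows "card V \<le> card U"
proof -
  have "V \<subseteq> fst ` U"
  proof
    fix v assume v: "v \<in> V"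
    have "\<not> V \<subseteq> {v}"
    proof
      assume "V \<subseteq> {v}"
      then have "card V \<le> card {v}" by (rule card_mono[rotated]) simp
      then show False using assms(4) by simp
    qed
    then obtain b where b: "b \<in> V" "b \<notin> {v}" by blast
    obtain e where "e \<in> U" "fst e \<in> {v}" using sc_exit[OF assms(3) _ _ b] v by blast
    then show "v \<in> fst ` U" by force
  qed
  moreover have "finite U" using assms(1,2) finite_subset by blast
  ultimately show ?thesis by (meson card_image_le card_mono finite_imageI le_trans)
qed

theorem mainTheorem4:
  fixes V :: "'a set" and E U Out :: "('a \<times> 'a) set"
  assumes "finite V"
    and "E \<subseteq> V \<times> V"
    and "\<forall>v. (v, v) \<notin> E"
    and "two_edge_strongly_biconnected V E"
    and "min_2ec_spanning V E U"
    and "algA_output V E U Out"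
  shows "card Out \<le> card (b_bridges V U) * (card V - 1) + 5 * card V"
proof -
  have n3: "3 \<le> card V" using assms(4) unfolding two_edge_strongly_biconnected_def by simp
  have UE: "U \<subseteq> E" and tec: "two_edge_connected V U"
    using assms(5) unfolding min_2ec_spanning_def by auto
  have UV: "U \<subseteq> V \<times> V" using UE assms(2) by blast
  have finU: "finite U" using UV assms(1) finite_subset by blast
  obtain r where r: "r \<in> V" using n3 by (metis card.empty ex_in_conv not_numeral_le_zero)
  have mad: "card U \<le> 4 * (card V - 1)" by (rule mader[OF assms(5) assms(2) assms(1) r])
  have scU: "strongly_connected V U" using tec unfolding two_edge_connected_def by simp
  show ?thesis
  proof (cases "two_edge_strongly_biconnected V U \<and> Out = U")
    case True
    then show ?thesis using mad by simp
  next
    case False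
    then obtain X3 ts where al: "aug_loop V E {} U X3" and dts: "distinct ts"
      and sts: "set ts = b_bridges V X3" and s4: "step4 V E ts X3 Out"
      using assms(6) unfolding algA_output_def by blast
    show ?thesis
    proof (cases "und_biconnected V U")
      case False
      have bb: "b_bridges V U = U"
      proof -
        have "\<not> strongly_biconnected V (U - {e})" if "e \<in> U" for e
        proof
          assume "strongly_biconnected V (U - {e})"
          then have "und_biconnected V (U - {e})" unfolding strongly_biconnected_def by simp
          then have "und_biconnected V U" by (rule ub_mono) blast
          then show False using False by simp
        qed
        then show ?thesis unfolding b_bridges_def by blast
      qed
      have "X3 \<subseteq> E" using aug_sub[OF al UE] .
      then have OE: "Out \<subseteq> E" using step4_sub[OF s4] by blast
      have finE: "finite E" using assms(1,2) finite_subset by blast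
      have "card Out \<le> card E" by (rule card_mono[OF finE OE])
      also have "\<dots> \<le> card V * (card V - 1)" by (rule card_E_bound[OF assms(1-3)])
      also have "\<dots> \<le> card U * (card V - 1)"
        using card_U_lower[OF assms(1) UV scU] n3 by simp
      finally show ?thesis using bb by simp
    next
      case True
      have X3: "X3 = U"
        using al
      proof (cases rule: aug_loop.cases)
        case stop then show ?thesis by simp
      next
        case (extend v w) then show ?thesis using True by simp
      qed
      have bsub: "b_bridges V U \<subseteq> U" unfolding b_bridges_def by blast
      have len: "length ts = card (b_bridges V U)" using dts sts X3 distinct_card by metis
      have "card Out \<le> card U + length ts * (card V - 1)"
        by (rule step4_bound[OF s4[unfolded X3] assms(1-3)]) (use n3 UE sts X3 bsub tec in auto)
      then show ?thesis using mad len by simp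
    qed
  qed
qed


end
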